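(* Let $V\subseteq\mathbb{R}^n$ be any real algebraic variety. Then: (i) there exists a finite normal form game with $3$ players whose set of totally mixed Nash equilibria is stably isomorphic to $V$; and (ii) there exists a finite normal form game with some number $N$ of players, each of whom has exactly two pure strategies, whose set of totally mixed Nash equilibria is stably isomorphic to $V$.
   Context: A real algebraic variety is the set of common real zeros in $\mathbb{R}^n$ of finitely many real polynomials; a semialgebraic set is a subset of some $\mathbb{R}^k$ defined by a finite Boolean combination of real polynomial equations and inequalities. Two semialgebraic sets are semialgebraically isomorphic if there is a homeomorphism between them whose graph is a semialgebraic set. Two semialgebraic sets are stably isomorphic if they are equivalent under the equivalence relation generated by semialgebraic isomorphisms and the canonical projections $W\times\mathbb{R}^k\to W$ ($k\ge 0$). A finite normal form game consists of players $I=\{1,\dots,N\}$, finite pure strategy sets $S_i=\{s_{i0},\dots,s_{id_i}\}$, and payoff functions $u_i:S=\prod_i S_i\to\mathbb{R}$. A mixed strategy of player $i$ is a function $\sigma_i:S_i\to[0,1]$ with $\sum_{s\in S_i}\sigma_i(s)=1$; a strategy profile is $\sigma=(\sigma_1,\dots,\sigma_N)$, and the expected payoff is $u_i(\sigma)=\sum_{s\in S}u_i(s)\sigma_1(s_1)\cdots\sigma_N(s_N)$. We write $u_i(s_{ij},\sigma_{-i})$ for the expected payoff of player $i$ when $i$ plays the pure strategy $s_{ij}$ and the others play according to $\sigma$. A profile $\sigma$ is a totally mixed Nash equilibrium if $0<\sigma_i(s_{ij})<1$ for all $i,j$ and $u_i(s_{ij},\sigma_{-i})=u_i(s_{i0},\sigma_{-i})$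 for all $i$ and all $j=1,\dots,d_i$. The set of totally mixed Nash equilibria is regarded as a semialgebraic subset of $\mathbb{R}^{\sum_i d_i}$ via the coordinates $(\sigma_i(s_{ij}))_{i\in I,\,1\le j\le d_i}$. *)

theory Defs
  imports "HOL-Analysis.Analysis"
begin

text \<open>A point of R^k is represented by a function x :: nat => real with
  x i = 0 for all i >= k (coordinates x 0, ..., x (k-1)).  The type nat => real
  carries the product topology, whose restriction to R^k is the Euclidean one.\<close>

definition Rk :: "nat \<Rightarrow> (nat \<Rightarrow> real) set" where
  "Rk k = {x. \<forall>i\<ge>k. x i = 0}"

inductive poly_fn :: "((nat \<Rightarrow> real) \<Rightarrow> real) \<Rightarrow> bool" where
  const: "poly_fn (\<lambda>x. c)"
| coord: "poly_fn (\<lambda>x. x i)"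
| add: "poly_fn p \<Longrightarrow> poly_fn q \<Longrightarrow> poly_fn (\<lambda>x. p x + q x)"
| mult: "poly_fn p \<Longrightarrow> poly_fn q \<Longrightarrow> poly_fn (\<lambda>x. p x * q x)"

definition real_variety :: "nat \<Rightarrow> (nat \<Rightarrow> real) set \<Rightarrow> bool" where
  "real_variety n V \<longleftrightarrow>
     (\<exists>P. finite P \<and> (\<forall>p\<in>P. poly_fn p) \<and> V = {x \<in> Rk n. \<forall>p\<in>P. p x = 0})"

inductive semialg :: "nat \<Rightarrow> (nat \<Rightarrow> real) set \<Rightarrow> bool" for k where
  eq: "poly_fn p \<Longrightarrow> semialg k {x \<in> Rk k. p x = 0}"
| gt: "poly_fn p \<Longrightarrow> semialg k {x \<in> Rk k. p x > 0}"
| union: "semialg k S \<Longrightarrow> semialg k T \<Longrightarrow> semialg k (S \<union> T)"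
| compl: "semialg k S \<Longrightarrow> semialg k (Rk k - S)"

definition join :: "nat \<Rightarrow> (nat \<Rightarrow> real) \<Rightarrow> (nat \<Rightarrow> real) \<Rightarrow> (nat \<Rightarrow> real)" where
  "join k x y = (\<lambda>i. if i < k then x i else y (i - k))"

definition semialg_iso ::
  "nat \<Rightarrow> (nat \<Rightarrow> real) set \<Rightarrow> nat \<Rightarrow> (nat \<Rightarrow> real) set \<Rightarrow> bool" where
  "semialg_iso k S m T \<longleftrightarrow> semialg k S \<and> semialg m T \<and>
     (\<exists>f g. homeomorphism S T f g \<and> semialg (k + m) {join k x (f x) | x. x \<in> S})"

definition cyl :: "nat \<Rightarrow> (nat \<Rightarrow> real) set \<Rightarrow> nat \<Rightarrow> (nat \<Rightarrow> real) set" where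
  "cyl k W j = {x \<in> Rk (k + j). (\<lambda>i. if i < k then x i else 0) \<in> W}"

inductive stably_iso ::
  "nat \<times> (nat \<Rightarrow> real) set \<Rightarrow> nat \<times> (nat \<Rightarrow> real) set \<Rightarrow> bool" where
  iso: "semialg_iso k S m T \<Longrightarrow> stably_iso (k, S) (m, T)"
| proj: "semialg k W \<Longrightarrow> stably_iso (k + j, cyl k W j) (k, W)"
| sym: "stably_iso A B \<Longrightarrow> stably_iso B A"
| trans: "stably_iso A B \<Longrightarrow> stably_iso B C \<Longrightarrow> stably_iso A C"

text \<open>Players are 0, ..., N-1; player i has pure strategies 0, ..., d i
  (strategy j stands for s_(i,j)); u i s is the payoff of player i at the pure
  profile s.  Pure profiles are normalised to s l = 0 for l >= N.\<close>

definition profiles :: "nat \<Rightarrow> (nat \<Rightarrow> nat) \<Rightarrow> (nat \<Rightarrow> nat) set" where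
  "profiles N d = {s. (\<forall>i<N. s i \<le> d i) \<and> (\<forall>i\<ge>N. s i = 0)}"

text \<open>u_i(s_ij, sigma_-i), where sigma l j is the probability that player l plays j.\<close>
definition dev_payoff ::
  "nat \<Rightarrow> (nat \<Rightarrow> nat) \<Rightarrow> (nat \<Rightarrow> (nat \<Rightarrow> nat) \<Rightarrow> real) \<Rightarrow>
   (nat \<Rightarrow> nat \<Rightarrow> real) \<Rightarrow> nat \<Rightarrow> nat \<Rightarrow> real" where
  "dev_payoff N d u \<sigma> i j =
     (\<Sum>s \<in> {s \<in> profiles N d. s i = j}. u i s * (\<Prod>l \<in> {..<N} - {i}. \<sigma> l (s l)))"

text \<open>Coordinates: (sigma_i(s_ij)) for i < N, 1 <= j <= d i, ordered
  player-major; coordinate index of (i,j) is (sum of d l, l < i) + (j - 1).\<close>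
definition offset :: "(nat \<Rightarrow> nat) \<Rightarrow> nat \<Rightarrow> nat" where
  "offset d i = (\<Sum>l<i. d l)"

definition strat_of_coords ::
  "(nat \<Rightarrow> nat) \<Rightarrow> (nat \<Rightarrow> real) \<Rightarrow> nat \<Rightarrow> nat \<Rightarrow> real" where
  "strat_of_coords d y i j =
     (if j = 0 then 1 - (\<Sum>j'\<in>{1..d i}. y (offset d i + j' - 1))
      else y (offset d i + j - 1))"

definition tmne ::
  "nat \<Rightarrow> (nat \<Rightarrow> nat) \<Rightarrow> (nat \<Rightarrow> (nat \<Rightarrow> nat) \<Rightarrow> real) \<Rightarrow> (nat \<Rightarrow> real) set" where
  "tmne N d u = {y \<in> Rk (\<Sum>i<N. d i).
     (\<forall>i<N. \<forall>j\<le>d i. 0 < strat_of_coords d y i j \<and> strat_of_coords d y i j < 1) \<and>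
     (\<forall>i<N. \<forall>j\<in>{1..d i}.
        dev_payoff N d u (strat_of_coords d y) i j = dev_payoff N d u (strat_of_coords d y) i 0)}"

end

theory Submission
  imports Defs
begin

lemma semialg_sub: "semialg k S \<Longrightarrow> S \<subseteq> Rk k"
  by (induction rule: semialg.induct) auto

lemma sa_eq: "poly_fn p \<Longrightarrow> semialg k {x\<in>Rk k. p x = 0}"
  by (rule semialg.eq)

lemma sa_gt: "poly_fn p \<Longrightarrow> semialg k {x\<in>Rk k. 0 < p x}"
  by (rule semialg.gt)

lemma sa_true: "semialg k {x\<in>Rk k. True}"
  using sa_eq[OF poly_fn.const[of 0], of k] by simp

lemma sa_conj:
  assumes "semialg k {x\<in>Rk k. P x}" "semialg k {x\<in>Rk k. Q x}"
  shows "semialg k {x\<in>Rk k. P x \<and> Q x}"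
proof -
  have "{x\<in>Rk k. P x \<and> Q x} = Rk k - ((Rk k - {x\<in>Rk k. P x}) \<union> (Rk k - {x\<in>Rk k. Q x}))"
    by auto
  thus ?thesis using assms by (simp only:) (intro semialg.compl semialg.union)
qed

lemma sa_all_less:
  fixes m :: nat
  assumes "\<And>i. i < m \<Longrightarrow> semialg k {x\<in>Rk k. P i x}"
  shows "semialg k {x\<in>Rk k. \<forall>i<m. P i x}"
proof -
  have "(\<forall>i<m. semialg k {x\<in>Rk k. P i x}) \<longrightarrow> semialg k {x\<in>Rk k. \<forall>i<m. P i x}"
  proof (induction m)
    case 0 then show ?case using sa_true by simp
  next
    case (Suc m)
    have "{x\<in>Rk k. \<forall>i<Suc m. P i x} = {x\<in>Rk k. (\<forall>i<m. P i x) \<and> P m x}"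
      by (auto simp: less_Suc_eq)
    then show ?case using Suc sa_conj by simp
  qed
  thus ?thesis using assms by blast
qed

lemma sa_all_list:
  assumes "\<And>e. e \<in> set xs \<Longrightarrow> semialg k {x\<in>Rk k. P e x}"
  shows "semialg k {x\<in>Rk k. \<forall>e\<in>set xs. P e x}"
  using assms
proof (induction xs)
  case Nil then show ?case using sa_true by simp
next
  case (Cons a xs)
  have "{x\<in>Rk k. \<forall>e\<in>set (a#xs). P e x} = {x\<in>Rk k. P a x \<and> (\<forall>e\<in>set xs. P e x)}"
    by auto
  then show ?case using Cons sa_conj by simp
qed

lemma poly_fn_sub: "poly_fn p \<Longrightarrow> poly_fn q \<Longrightarrow> poly_fn (\<lambda>x. p x - q x)"
proof -
  assume "poly_fn p" "poly_fn q"
  hence "poly_fn (\<lambda>x. p x + (\<lambda>x. -1) x * q x)" by (intro poly_fn.intros)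
  thus ?thesis by simp
qed

lemma poly_fn_sum: "finite A \<Longrightarrow> (\<And>i. i \<in> A \<Longrightarrow> poly_fn (f i)) \<Longrightarrow> poly_fn (\<lambda>x. \<Sum>i\<in>A. f i x)"
proof (induction A rule: finite_induct)
  case empty then show ?case using poly_fn.const[of 0] by simp
next
  case (insert a A) then show ?case by (simp add: poly_fn.add)
qed

lemma poly_fn_prod: "finite A \<Longrightarrow> (\<And>i. i \<in> A \<Longrightarrow> poly_fn (f i)) \<Longrightarrow> poly_fn (\<lambda>x. \<Prod>i\<in>A. f i x)"
proof (induction A rule: finite_induct)
  case empty then show ?case using poly_fn.const[of 1] by simp
next
  case (insert a A) then show ?case by (simp add: poly_fn.mult)
qed

lemma poly_fn_sum_list: "(\<And>e. e \<in> set xs \<Longrightarrow> poly_fn (f e)) \<Longrightarrow> poly_fn (\<lambda>x. sum_list (map (\<lambda>e. f e x) xs))"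
proof (induction xs)
  case Nil then show ?case using poly_fn.const[of 0] by simp
next
  case (Cons a xs) then show ?case by (simp add: poly_fn.add)
qed

lemma poly_fn_pow: "poly_fn p \<Longrightarrow> poly_fn (\<lambda>x. p x ^ m)"
proof (induction m)
  case 0 then show ?case using poly_fn.const[of 1] by simp
next
  case (Suc m) then show ?case using poly_fn.mult[of p "\<lambda>x. p x ^ m"] by simp
qed

lemma sa_lt: "poly_fn p \<Longrightarrow> poly_fn q \<Longrightarrow> semialg k {x\<in>Rk k. p x < q x}"
  using sa_gt[OF poly_fn_sub[of q p]] by simp

lemma sa_eq2: "poly_fn p \<Longrightarrow> poly_fn q \<Longrightarrow> semialg k {x\<in>Rk k. p x = q x}"
  using sa_eq[OF poly_fn_sub[of p q]] by simp

datatype pexp = Cst real | Var nat | Ad pexp pexp | Mu pexp pexp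

fun ev :: "pexp \<Rightarrow> (nat \<Rightarrow> real) \<Rightarrow> real" where
  "ev (Cst c) z = c"
| "ev (Var i) z = z i"
| "ev (Ad e1 e2) z = ev e1 z + ev e2 z"
| "ev (Mu e1 e2) z = ev e1 z * ev e2 z"

lemma poly_fn_pexp: "poly_fn p \<Longrightarrow> \<exists>e. p = ev e"
proof (induction rule: poly_fn.induct)
  case (const c) then show ?case by (metis ev.simps(1))
next
  case (coord i) then show ?case by (metis ev.simps(2))
next
  case (add p q) then obtain e1 e2 where "p = ev e1" "q = ev e2" by blast
  then show ?case by (intro exI[of _ "Ad e1 e2"]) auto
next
  case (mult p q) then obtain e1 e2 where "p = ev e1" "q = ev e2" by blast
  then show ?case by (intro exI[of _ "Mu e1 e2"]) auto
qed

lemma poly_fn_ev: "poly_fn (ev e)"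
proof (induction e)
  case (Cst c)
  have "ev (Cst c) = (\<lambda>z. c)" by (rule ext) simp
  then show ?case using poly_fn.const by metis
next
  case (Var i)
  have "ev (Var i) = (\<lambda>z. z i)" by (rule ext) simp
  then show ?case using poly_fn.coord by metis
next
  case (Ad e1 e2)
  have "ev (Ad e1 e2) = (\<lambda>z. ev e1 z + ev e2 z)" by (rule ext) simp
  then show ?case using poly_fn.add[OF Ad.IH] by metis
next
  case (Mu e1 e2)
  have "ev (Mu e1 e2) = (\<lambda>z. ev e1 z * ev e2 z)" by (rule ext) simp
  then show ?case using poly_fn.mult[OF Mu.IH] by metis
qed

lemma poly_fn_cont: "poly_fn p \<Longrightarrow> continuous_on S p"
proof (induction rule: poly_fn.induct)
  case (coord i) then show ?case
    using continuous_on_subset[OF continuous_on_product_coordinates[of i]] by blast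
next
  case (const c) then show ?case by (rule continuous_on_const)
next
  case (add p q) then show ?case by (intro continuous_on_add) 
next
  case (mult p q) then show ?case by (intro continuous_on_mult)
qed

lemma poly_fn_comp: "poly_fn p \<Longrightarrow> (\<And>i. poly_fn (\<lambda>x. g x i)) \<Longrightarrow> poly_fn (\<lambda>x. p (g x))"
proof (induction rule: poly_fn.induct)
  case (const c) show ?case by (rule poly_fn.const)
next
  case (coord i) then show ?case by blast
next
  case (add p q) then show ?case by (simp add: poly_fn.add)
next
  case (mult p q) then show ?case by (simp add: poly_fn.mult)
qed


fun vs :: "pexp \<Rightarrow> nat set" where
  "vs (Cst c) = {}"
| "vs (Var i) = {i}"
| "vs (Ad e1 e2) = vs e1 \<union> vs e2"
| "vs (Mu e1 e2) = vs e1 \<union> vs e2"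

lemma ev_cong: "(\<And>i. i \<in> vs e \<Longrightarrow> z i = z' i) \<Longrightarrow> ev e z = ev e z'"
  by (induction e) auto

fun bnd :: "pexp \<Rightarrow> real" where
  "bnd (Cst c) = \<bar>c\<bar> + 1"
| "bnd (Var i) = 1"
| "bnd (Ad e1 e2) = bnd e1 + bnd e2"
| "bnd (Mu e1 e2) = bnd e1 * bnd e2"

lemma bnd_ge1: "1 \<le> bnd e"
proof (induction e)
  case (Mu e1 e2) then show ?case using mult_mono[of 1 "bnd e1" 1 "bnd e2"] by simp
qed auto

lemma bnd_ev: "(\<And>i. i \<in> vs e \<Longrightarrow> \<bar>z i\<bar> < 1) \<Longrightarrow> \<bar>ev e z\<bar> < bnd e"
proof (induction e)
  case (Ad e1 e2)
  then have "\<bar>ev e1 z\<bar> < bnd e1" "\<bar>ev e2 z\<bar> < bnd e2" by auto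
  then show ?case by auto
next
  case (Mu e1 e2)
  then have h: "\<bar>ev e1 z\<bar> < bnd e1" "\<bar>ev e2 z\<bar> < bnd e2" by auto
  have "\<bar>ev e1 z * ev e2 z\<bar> = \<bar>ev e1 z\<bar> * \<bar>ev e2 z\<bar>" by (simp add: abs_mult)
  also have "\<dots> < bnd e1 * bnd e2"
    using h by (intro mult_strict_mono) auto
  finally show ?case by simp
qed auto

fun prodL :: "pexp list \<Rightarrow> pexp" where
  "prodL [] = Cst 1"
| "prodL (e # es) = Mu e (prodL es)"

lemma ev_prodL: "ev (prodL es) z = prod_list (map (\<lambda>e. ev e z) es)"
  by (induction es) auto

lemma vs_prodL: "vs (prodL es) = (\<Union>e\<in>set es. vs e)"
  by (induction es) auto

definition Wf :: "nat \<Rightarrow> (nat \<Rightarrow> real) \<Rightarrow> real" where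
  "Wf n z = (\<Prod>k<n. z k * z (n + k))"

definition Wexp :: "nat \<Rightarrow> pexp" where
  "Wexp n = prodL (map (\<lambda>k. Mu (Var k) (Var (n + k))) [0..<n])"

definition Wpow :: "nat \<Rightarrow> nat \<Rightarrow> pexp" where
  "Wpow n m = prodL (replicate m (Wexp n))"

definition leafT :: "nat \<Rightarrow> nat \<Rightarrow> pexp" where
  "leafT n j = Mu (Ad (Mu (Var j) (Var j)) (Mu (Cst (-1)) (Mu (Var (n + j)) (Var (n + j)))))
      (prodL (map (\<lambda>k. Mu (Var k) (Var (n + k))) (filter (\<lambda>k. k \<noteq> j) [0..<n])))"

fun deg :: "nat \<Rightarrow> pexp \<Rightarrow> nat" where
  "deg n (Cst c) = 0"
| "deg n (Var j) = (if j < n then 1 else 0)"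
| "deg n (Ad e1 e2) = max (deg n e1) (deg n e2)"
| "deg n (Mu e1 e2) = deg n e1 + deg n e2"

fun tr :: "nat \<Rightarrow> pexp \<Rightarrow> pexp" where
  "tr n (Cst c) = Cst c"
| "tr n (Var j) = (if j < n then leafT n j else Cst 0)"
| "tr n (Ad e1 e2) = Ad (Mu (Wpow n (max (deg n e1) (deg n e2) - deg n e1)) (tr n e1))
                        (Mu (Wpow n (max (deg n e1) (deg n e2) - deg n e2)) (tr n e2))"
| "tr n (Mu e1 e2) = Mu (tr n e1) (tr n e2)"

lemma ev_Wexp: "ev (Wexp n) z = Wf n z"
proof -
  have "(\<Prod>k\<in>{..<n}. z k * z (n + k)) = prod_list (map (\<lambda>k. z k * z (n + k)) [0..<n])"
    by (metis atLeast_upt distinct_upt prod.distinct_set_conv_list)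
  then show ?thesis unfolding Wexp_def Wf_def ev_prodL by (simp add: comp_def)
qed

lemma ev_Wpow: "ev (Wpow n m) z = Wf n z ^ m"
  unfolding Wpow_def ev_prodL by (simp add: ev_Wexp)

lemma ev_leafT:
  assumes "j < n"
  shows "ev (leafT n j) z = (z j * z j - z (n + j) * z (n + j)) * (\<Prod>k\<in>{..<n} - {j}. z k * z (n + k))"
proof -
  have "set (filter (\<lambda>k. k \<noteq> j) [0..<n]) = {..<n} - {j}" by auto
  moreover have "distinct (filter (\<lambda>k. k \<noteq> j) [0..<n])" by simp
  ultimately have "(\<Prod>k\<in>{..<n} - {j}. z k * z (n + k)) = prod_list (map (\<lambda>k. z k * z (n + k)) (filter (\<lambda>k. k \<noteq> j) [0..<n]))"
    by (metis prod.distinct_set_conv_list)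
  also have "\<dots> = ev (prodL (map (\<lambda>k. Mu (Var k) (Var (n + k))) (filter (\<lambda>k. k \<noteq> j) [0..<n]))) z"
    unfolding ev_prodL by (simp add: comp_def)
  finally have h: "ev (prodL (map (\<lambda>k. Mu (Var k) (Var (n + k))) (filter (\<lambda>k. k \<noteq> j) [0..<n]))) z
     = (\<Prod>k\<in>{..<n} - {j}. z k * z (n + k))" by simp
  show ?thesis unfolding leafT_def ev.simps h by simp
qed

lemma vs_Wexp: "vs (Wexp n) \<subseteq> {..<2*n}"
  unfolding Wexp_def vs_prodL by auto

lemma vs_Wpow: "vs (Wpow n m) \<subseteq> {..<2*n}"
proof -
  have "vs (Wpow n m) \<subseteq> vs (Wexp n)" unfolding Wpow_def vs_prodL by auto
  then show ?thesis using vs_Wexp by blast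
qed

lemma vs_leafT: "j < n \<Longrightarrow> vs (leafT n j) \<subseteq> {..<2*n}"
  unfolding leafT_def by (auto simp: vs_prodL)

lemma vs_tr: "vs (tr n e) \<subseteq> {..<2*n}"
proof (induction e)
  case (Ad e1 e2) then show ?case using vs_Wpow by auto
next
  case (Var j) then show ?case using vs_leafT by auto
qed auto

lemma ev_tr:
  assumes pos: "\<And>j. j < n \<Longrightarrow> 0 < z j \<and> 0 < z (n + j)"
    and x: "x \<in> Rk n" and xz: "\<And>j. j < n \<Longrightarrow> x j = z j / z (n + j) - z (n + j) / z j"
  shows "ev (tr n e) z = Wf n z ^ deg n e * ev e x"
proof (induction e)
  case (Cst c) then show ?case by simp
next
  case (Var j)
  show ?case
  proof (cases "j < n")
    case True
    have p: "0 < z j" "0 < z (n + j)" using pos True by auto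
    have "Wf n z = (z j * z (n + j)) * (\<Prod>k\<in>{..<n} - {j}. z k * z (n + k))"
      unfolding Wf_def using True by (simp add: prod.remove)
    have xj: "x j * (z j * z (n + j)) = z j * z j - z (n + j) * z (n + j)"
      using p xz[OF True] by (simp add: field_simps)
    have "Wf n z * x j = (x j * (z j * z (n + j))) * (\<Prod>k\<in>{..<n} - {j}. z k * z (n + k))"
      using \<open>Wf n z = _\<close> by (simp only: mult_ac)
    then have "Wf n z * x j = (z j * z j - z (n + j) * z (n + j)) * (\<Prod>k\<in>{..<n} - {j}. z k * z (n + k))"
      using xj by simp
    then show ?thesis using True ev_leafT[OF True] by simp
  next
    case False
    then have "x j = 0" using x unfolding Rk_def by auto
    then show ?thesis using False by simp
  qed
next
  case (Ad e1 e2)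
  let ?d = "max (deg n e1) (deg n e2)"
  have "ev (tr n (Ad e1 e2)) z = Wf n z ^ (?d - deg n e1) * (Wf n z ^ deg n e1 * ev e1 x)
      + Wf n z ^ (?d - deg n e2) * (Wf n z ^ deg n e2 * ev e2 x)"
    using Ad by (simp add: ev_Wpow)
  also have "\<dots> = Wf n z ^ ?d * (ev e1 x + ev e2 x)"
    by (simp add: algebra_simps power_add[symmetric])
  finally show ?case by simp
next
  case (Mu e1 e2)
  then show ?case by (simp add: power_add)
qed

lemma Wf_pos: "(\<And>j. j < n \<Longrightarrow> 0 < z j \<and> 0 < z (n + j)) \<Longrightarrow> 0 < Wf n z"
  unfolding Wf_def by (intro prod_pos) auto


type_synonym eqn = "real \<times> (real \<times> nat) list \<times> (real \<times> nat \<times> nat) list"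

fun eqv :: "eqn \<Rightarrow> (nat \<Rightarrow> real) \<Rightarrow> real" where
  "eqv (c, L, B) z = c + (\<Sum>(w,i)\<leftarrow>L. w * z i) + (\<Sum>(w,i,j)\<leftarrow>B. w * z i * z j)"

fun sz :: "pexp \<Rightarrow> nat" where
  "sz (Cst c) = 1"
| "sz (Var j) = 1"
| "sz (Ad e1 e2) = 1 + sz e1 + sz e2"
| "sz (Mu e1 e2) = 1 + sz e1 + sz e2"

lemma sz_pos: "0 < sz e" by (cases e) auto

fun ceqs :: "real \<Rightarrow> real \<Rightarrow> nat \<Rightarrow> pexp \<Rightarrow> nat \<Rightarrow> eqn list" where
  "ceqs a b M (Cst c) p = [(-(a*c+b), [(1,p)], [])]"
| "ceqs a b M (Var j) p = [(-b, [(1,p), (-a, j)], [])]"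
| "ceqs a b M (Ad e1 e2) p = (b, [(1,p), (-1,p+1), (-1,p+1+sz e1)], [])
     # ceqs a b M e1 (p+1) @ ceqs a b M e2 (p+1+sz e1)"
| "ceqs a b M (Mu e1 e2) p = (-(a*b) - b*b, [(a,p), (b,p+1), (b, M+(p+1+sz e1))], [(-1, p+1, M+(p+1+sz e1))])
     # ceqs a b M e1 (p+1) @ ceqs a b M e2 (p+1+sz e1)"

fun good :: "real \<Rightarrow> real \<Rightarrow> pexp \<Rightarrow> nat \<Rightarrow> (nat \<Rightarrow> real) \<Rightarrow> bool" where
  "good a b (Cst c) p z = (z p = a * c + b)"
| "good a b (Var j) p z = (z p = a * z j + b)"
| "good a b (Ad e1 e2) p z = (z p = a * ev (Ad e1 e2) z + b \<and> good a b e1 (p+1) z \<and> good a b e2 (p+1+sz e1) z)"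
| "good a b (Mu e1 e2) p z = (z p = a * ev (Mu e1 e2) z + b \<and> good a b e1 (p+1) z \<and> good a b e2 (p+1+sz e1) z)"

lemma good_root: "good a b e p z \<Longrightarrow> z p = a * ev e z + b"
  by (cases e) auto

lemma circ:
  assumes "a \<noteq> 0" "\<And>q. p \<le> q \<Longrightarrow> q < p + sz e \<Longrightarrow> z (M + q) = z q"
  shows "(\<forall>eq\<in>set (ceqs a b M e p). eqv eq z = 0) \<longleftrightarrow> good a b e p z"
  using assms(2)
proof (induction e arbitrary: p)
  case (Cst c) then show ?case by (auto simp: algebra_simps)
next
  case (Var j) then show ?case by (auto simp: algebra_simps)
next
  case (Ad e1 e2)
  have IH1: "(\<forall>eq\<in>set (ceqs a b M e1 (p+1)). eqv eq z = 0) \<longleftrightarrow> good a b e1 (p+1) z"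
    using Ad.prems by (intro Ad.IH(1)) auto
  have IH2: "(\<forall>eq\<in>set (ceqs a b M e2 (p+1+sz e1)). eqv eq z = 0) \<longleftrightarrow> good a b e2 (p+1+sz e1) z"
    using Ad.prems by (intro Ad.IH(2)) auto
  show ?case
  proof
    assume h: "\<forall>eq\<in>set (ceqs a b M (Ad e1 e2) p). eqv eq z = 0"
    then have g1: "good a b e1 (p+1) z" and g2: "good a b e2 (p+1+sz e1) z" using IH1 IH2 by auto
    have "b + z p - z (p+1) - z (p+1+sz e1) = 0" using h by simp
    then show "good a b (Ad e1 e2) p z" using g1 g2 good_root[OF g1] good_root[OF g2]
      by (simp add: algebra_simps)
  next
    assume h: "good a b (Ad e1 e2) p z"
    then have g1: "good a b e1 (p+1) z" and g2: "good a b e2 (p+1+sz e1) z" by auto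
    have "b + z p - z (p+1) - z (p+1+sz e1) = 0"
      using h good_root[OF g1] good_root[OF g2] by (simp add: algebra_simps)
    then show "\<forall>eq\<in>set (ceqs a b M (Ad e1 e2) p). eqv eq z = 0" using IH1 IH2 g1 g2 by auto
  qed
next
  case (Mu e1 e2)
  have IH1: "(\<forall>eq\<in>set (ceqs a b M e1 (p+1)). eqv eq z = 0) \<longleftrightarrow> good a b e1 (p+1) z"
    using Mu.prems by (intro Mu.IH(1)) auto
  have IH2: "(\<forall>eq\<in>set (ceqs a b M e2 (p+1+sz e1)). eqv eq z = 0) \<longleftrightarrow> good a b e2 (p+1+sz e1) z"
    using Mu.prems by (intro Mu.IH(2)) auto
  have cp: "z (M + (p+1+sz e1)) = z (p+1+sz e1)"
    using Mu.prems[of "p+1+sz e1"] sz_pos[of e2] by simp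
  have key: "good a b e1 (p+1) z \<Longrightarrow> good a b e2 (p+1+sz e1) z \<Longrightarrow>
      (-(a*b) - b*b + a * z p + b * z (p+1) + b * z (p+1+sz e1) - z (p+1) * z (p+1+sz e1) = 0
       \<longleftrightarrow> z p = a * (ev e1 z * ev e2 z) + b)"
  proof -
    assume g1: "good a b e1 (p+1) z" and g2: "good a b e2 (p+1+sz e1) z"
    have "-(a*b) - b*b + a * z p + b * z (p+1) + b * z (p+1+sz e1) - z (p+1) * z (p+1+sz e1)
        = a * (z p - (a * (ev e1 z * ev e2 z) + b))"
      using good_root[OF g1] good_root[OF g2] by (simp add: algebra_simps)
    then show ?thesis using assms(1) by simp
  qed
  show ?case
  proof
    assume h: "\<forall>eq\<in>set (ceqs a b M (Mu e1 e2) p). eqv eq z = 0"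
    then have g1: "good a b e1 (p+1) z" and g2: "good a b e2 (p+1+sz e1) z" using IH1 IH2 by auto
    have "-(a*b) - b*b + a * z p + b * z (p+1) + b * z (p+1+sz e1) - z (p+1) * z (p+1+sz e1) = 0"
      using h cp by (simp add: algebra_simps)
    then show "good a b (Mu e1 e2) p z" using g1 g2 key by simp
  next
    assume h: "good a b (Mu e1 e2) p z"
    then have g1: "good a b e1 (p+1) z" and g2: "good a b e2 (p+1+sz e1) z" by auto
    have "-(a*b) - b*b + a * z p + b * z (p+1) + b * z (p+1+sz e1) - z (p+1) * z (p+1+sz e1) = 0"
      using h key g1 g2 by simp
    then have "eqv (-(a*b) - b*b, [(a,p), (b,p+1), (b, M+(p+1+sz e1))], [(-1, p+1, M+(p+1+sz e1))]) z = 0"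
      using cp by (simp add: algebra_simps)
    then show "\<forall>eq\<in>set (ceqs a b M (Mu e1 e2) p). eqv eq z = 0" using IH1 IH2 g1 g2 by auto
  qed
qed

lemma good_cong:
  assumes "\<And>q. q \<in> vs e \<or> (p \<le> q \<and> q < p + sz e) \<Longrightarrow> z q = z' q"
  shows "good a b e p z = good a b e p z'"
  using assms
proof (induction e arbitrary: p)
  case (Cst c) then show ?case by auto
next
  case (Var j) then show ?case by auto
next
  case (Ad e1 e2)
  have "ev (Ad e1 e2) z = ev (Ad e1 e2) z'" using Ad.prems by (intro ev_cong) auto
  moreover have "good a b e1 (p+1) z = good a b e1 (p+1) z'" using Ad.prems by (intro Ad.IH(1)) auto
  moreover have "good a b e2 (p+1+sz e1) z = good a b e2 (p+1+sz e1) z'" using Ad.prems by (intro Ad.IH(2)) auto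
  moreover have "z p = z' p" using Ad.prems by auto
  ultimately show ?case by simp
next
  case (Mu e1 e2)
  have "ev (Mu e1 e2) z = ev (Mu e1 e2) z'" using Mu.prems by (intro ev_cong) auto
  moreover have "good a b e1 (p+1) z = good a b e1 (p+1) z'" using Mu.prems by (intro Mu.IH(1)) auto
  moreover have "good a b e2 (p+1+sz e1) z = good a b e2 (p+1+sz e1) z'" using Mu.prems by (intro Mu.IH(2)) auto
  moreover have "z p = z' p" using Mu.prems by auto
  ultimately show ?case by simp
qed

lemma good_uniq:
  assumes "good a b e p z" "good a b e p z'" "\<And>i. i \<in> vs e \<Longrightarrow> z i = z' i"
  shows "p \<le> q \<Longrightarrow> q < p + sz e \<Longrightarrow> z q = z' q"
  using assms
proof (induction e arbitrary: p)
  case (Cst c) then have "q = p" by simp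
  then show ?case using Cst by simp
next
  case (Var j) then have "q = p" by simp
  then show ?case using Var by simp
next
  case (Ad e1 e2)
  have ev: "ev (Ad e1 e2) z = ev (Ad e1 e2) z'" using Ad.prems by (intro ev_cong) auto
  show ?case
  proof (cases "q = p")
    case True then show ?thesis using Ad.prems ev by simp
  next
    case False
    then have "(p+1 \<le> q \<and> q < p+1+sz e1) \<or> (p+1+sz e1 \<le> q \<and> q < p+1+sz e1+sz e2)"
      using Ad.prems by auto
    then show ?thesis
    proof
      assume "p+1 \<le> q \<and> q < p+1+sz e1"
      then show ?thesis using Ad.prems by (intro Ad.IH(1)[of "p+1"]) auto
    next
      assume "p+1+sz e1 \<le> q \<and> q < p+1+sz e1+sz e2"
      then show ?thesis using Ad.prems by (intro Ad.IH(2)[of "p+1+sz e1"]) auto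
    qed
  qed
next
  case (Mu e1 e2)
  have ev: "ev (Mu e1 e2) z = ev (Mu e1 e2) z'" using Mu.prems by (intro ev_cong) auto
  show ?case
  proof (cases "q = p")
    case True then show ?thesis using Mu.prems ev by simp
  next
    case False
    then have "(p+1 \<le> q \<and> q < p+1+sz e1) \<or> (p+1+sz e1 \<le> q \<and> q < p+1+sz e1+sz e2)"
      using Mu.prems by auto
    then show ?thesis
    proof
      assume "p+1 \<le> q \<and> q < p+1+sz e1"
      then show ?thesis using Mu.prems by (intro Mu.IH(1)[of "p+1"]) auto
    next
      assume "p+1+sz e1 \<le> q \<and> q < p+1+sz e1+sz e2"
      then show ?thesis using Mu.prems by (intro Mu.IH(2)[of "p+1+sz e1"]) auto
    qed
  qed
qed

fun fillc :: "real \<Rightarrow> real \<Rightarrow> pexp \<Rightarrow> nat \<Rightarrow> (nat \<Rightarrow> real) \<Rightarrow> (nat \<Rightarrow> real)" where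
  "fillc a b (Cst c) p z = z(p := a * c + b)"
| "fillc a b (Var j) p z = z(p := a * z j + b)"
| "fillc a b (Ad e1 e2) p z = (fillc a b e2 (p+1+sz e1) (fillc a b e1 (p+1) z))(p := a * ev (Ad e1 e2) z + b)"
| "fillc a b (Mu e1 e2) p z = (fillc a b e2 (p+1+sz e1) (fillc a b e1 (p+1) z))(p := a * ev (Mu e1 e2) z + b)"

lemma fill_out: "q < p \<or> p + sz e \<le> q \<Longrightarrow> fillc a b e p z q = z q"
  by (induction e arbitrary: p z) auto

lemma fill_good: "(\<And>i. i \<in> vs e \<Longrightarrow> i < p) \<Longrightarrow> good a b e p (fillc a b e p z)"
proof (induction e arbitrary: p z)
  case (Cst c) then show ?case by simp
next
  case (Var j) then show ?case by simp
next
  case (Ad e1 e2)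
  define z1 where "z1 = fillc a b e1 (p+1) z"
  define z2 where "z2 = fillc a b e2 (p+1+sz e1) z1"
  define Z where "Z = z2(p := a * ev (Ad e1 e2) z + b)"
  have fe: "fillc a b (Ad e1 e2) p z = Z" unfolding Z_def z2_def z1_def by simp
  have pre: "\<And>i. i \<in> vs e1 \<Longrightarrow> i < p" "\<And>i. i \<in> vs e2 \<Longrightarrow> i < p" using Ad.prems by auto
  have g1: "good a b e1 (p+1) z1" unfolding z1_def by (intro Ad.IH(1)) (simp add: pre less_SucI)
  have g2: "good a b e2 (p+1+sz e1) z2" unfolding z2_def using pre(2) by (intro Ad.IH(2)) force
  have c1: "good a b e1 (p+1) Z = good a b e1 (p+1) z1"
  proof (rule good_cong)
    fix q assume "q \<in> vs e1 \<or> (p+1 \<le> q \<and> q < p+1+sz e1)"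
    then have "q \<noteq> p" "q < p+1+sz e1" using pre by force+
    then show "Z q = z1 q" unfolding Z_def z2_def using fill_out by simp
  qed
  have c2: "good a b e2 (p+1+sz e1) Z = good a b e2 (p+1+sz e1) z2"
  proof (rule good_cong)
    fix q assume "q \<in> vs e2 \<or> (p+1+sz e1 \<le> q \<and> q < p+1+sz e1+sz e2)"
    then have "q \<noteq> p" using Ad.prems by auto
    then show "Z q = z2 q" unfolding Z_def by simp
  qed
  have evq: "ev (Ad e1 e2) Z = ev (Ad e1 e2) z"
  proof (rule ev_cong)
    fix i assume i: "i \<in> vs (Ad e1 e2)"
    then have "i < p" using Ad.prems by auto
    then show "Z i = z i" unfolding Z_def z2_def z1_def using fill_out by simp
  qed
  have "Z p = a * ev (Ad e1 e2) z + b" unfolding Z_def by simp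
  then have r: "Z p = a * ev (Ad e1 e2) Z + b" by (simp only: evq)
  have "good a b (Ad e1 e2) p Z" unfolding good.simps using r g1 g2 c1 c2 by blast
  then show ?case using fe by simp
next
  case (Mu e1 e2)
  define z1 where "z1 = fillc a b e1 (p+1) z"
  define z2 where "z2 = fillc a b e2 (p+1+sz e1) z1"
  define Z where "Z = z2(p := a * ev (Mu e1 e2) z + b)"
  have fe: "fillc a b (Mu e1 e2) p z = Z" unfolding Z_def z2_def z1_def by simp
  have pre: "\<And>i. i \<in> vs e1 \<Longrightarrow> i < p" "\<And>i. i \<in> vs e2 \<Longrightarrow> i < p" using Mu.prems by auto
  have g1: "good a b e1 (p+1) z1" unfolding z1_def by (intro Mu.IH(1)) (simp add: pre less_SucI)
  have g2: "good a b e2 (p+1+sz e1) z2" unfolding z2_def using pre(2) by (intro Mu.IH(2)) force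
  have c1: "good a b e1 (p+1) Z = good a b e1 (p+1) z1"
  proof (rule good_cong)
    fix q assume "q \<in> vs e1 \<or> (p+1 \<le> q \<and> q < p+1+sz e1)"
    then have "q \<noteq> p" "q < p+1+sz e1" using pre by force+
    then show "Z q = z1 q" unfolding Z_def z2_def using fill_out by simp
  qed
  have c2: "good a b e2 (p+1+sz e1) Z = good a b e2 (p+1+sz e1) z2"
  proof (rule good_cong)
    fix q assume "q \<in> vs e2 \<or> (p+1+sz e1 \<le> q \<and> q < p+1+sz e1+sz e2)"
    then have "q \<noteq> p" using Mu.prems by auto
    then show "Z q = z2 q" unfolding Z_def by simp
  qed
  have evq: "ev (Mu e1 e2) Z = ev (Mu e1 e2) z"
  proof (rule ev_cong)
    fix i assume i: "i \<in> vs (Mu e1 e2)"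
    then have "i < p" using Mu.prems by auto
    then show "Z i = z i" unfolding Z_def z2_def z1_def using fill_out by simp
  qed
  have "Z p = a * ev (Mu e1 e2) z + b" unfolding Z_def by simp
  then have r: "Z p = a * ev (Mu e1 e2) Z + b" by (simp only: evq)
  have "good a b (Mu e1 e2) p Z" unfolding good.simps using r g1 g2 c1 c2 by blast
  then show ?case using fe by simp
qed

lemma cont_upd: "continuous_on S zf \<Longrightarrow> continuous_on S v \<Longrightarrow> continuous_on S (\<lambda>x. (zf x)(p := v x))"
proof (rule continuous_on_coordinatewise_then_product)
  fix i assume a: "continuous_on S zf" "continuous_on S v"
  show "continuous_on S (\<lambda>x. ((zf x)(p := v x)) i)"
  proof (cases "i = p")
    case True then show ?thesis using a(2) by simp
  next
    case False then show ?thesis using continuous_on_product_then_coordinatewise[OF a(1), of i] by simp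
  qed
qed

lemma cont_ev: "continuous_on S zf \<Longrightarrow> continuous_on S (\<lambda>x. ev e (zf x))"
  using continuous_on_compose2[OF poly_fn_cont[OF poly_fn_ev, of UNIV e] _ subset_UNIV, of S zf]
  by simp

lemma cont_aff: "continuous_on S g \<Longrightarrow> continuous_on S (\<lambda>x. a * g x + (b::real))"
  by (intro continuous_on_add continuous_on_mult continuous_on_const) auto

lemma cont_fill: "continuous_on S zf \<Longrightarrow> continuous_on S (\<lambda>x. fillc a b e p (zf x))"
proof (induction e arbitrary: p zf)
  case (Cst c) then show ?case by (simp only: fillc.simps) (rule cont_upd, assumption, rule continuous_on_const)
next
  case (Var j)
  have "continuous_on S (\<lambda>x. zf x j)" by (rule continuous_on_product_then_coordinatewise[OF Var])
  then show ?case using Var by (simp only: fillc.simps) (rule cont_upd, assumption, rule cont_aff)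
next
  case (Ad e1 e2)
  have c1: "continuous_on S (\<lambda>x. fillc a b e1 (p+1) (zf x))" by (rule Ad.IH(1)[OF Ad.prems])
  have c2: "continuous_on S (\<lambda>x. fillc a b e2 (p+1+sz e1) (fillc a b e1 (p+1) (zf x)))" by (rule Ad.IH(2)[OF c1])
  have c3: "continuous_on S (\<lambda>x. a * ev (Ad e1 e2) (zf x) + b)" by (rule cont_aff[OF cont_ev[OF Ad.prems]])
  show ?case by (simp only: fillc.simps) (rule cont_upd[OF c2 c3])
next
  case (Mu e1 e2)
  have c1: "continuous_on S (\<lambda>x. fillc a b e1 (p+1) (zf x))" by (rule Mu.IH(1)[OF Mu.prems])
  have c2: "continuous_on S (\<lambda>x. fillc a b e2 (p+1+sz e1) (fillc a b e1 (p+1) (zf x)))" by (rule Mu.IH(2)[OF c1])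
  have c3: "continuous_on S (\<lambda>x. a * ev (Mu e1 e2) (zf x) + b)" by (rule cont_aff[OF cont_ev[OF Mu.prems]])
  show ?case by (simp only: fillc.simps) (rule cont_upd[OF c2 c3])
qed

lemma good_bounds:
  assumes "good a b e p z" "\<And>i. i \<in> vs e \<Longrightarrow> \<bar>z i\<bar> < 1" "bnd e \<le> K"
    "a = \<epsilon> / (2 * K)" "b = \<epsilon> / 2" "0 < \<epsilon>"
  shows "p \<le> q \<Longrightarrow> q < p + sz e \<Longrightarrow> 0 < z q \<and> z q < \<epsilon>"
  using assms(1-3)
proof (induction e arbitrary: p)
  have K: "\<And>e K. bnd e \<le> K \<Longrightarrow> 0 < K" using bnd_ge1 by (meson less_le_trans zero_less_one)
  have root: "\<And>e p. good a b e p z \<Longrightarrow> (\<And>i. i \<in> vs e \<Longrightarrow> \<bar>z i\<bar> < 1) \<Longrightarrow> bnd e \<le> K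
     \<Longrightarrow> 0 < z p \<and> z p < \<epsilon>"
  proof -
    fix e p assume g: "good a b e p z" and v: "\<And>i. i \<in> vs e \<Longrightarrow> \<bar>z i\<bar> < 1" and bK: "bnd e \<le> K"
    have K0: "0 < K" using K[OF bK] .
    have lt: "\<bar>ev e z\<bar> < K" using bnd_ev[of e z, OF v] bK by linarith
    have "z p = a * ev e z + b" by (rule good_root[OF g])
    then have zp: "z p = \<epsilon> / (2 * K) * ev e z + \<epsilon> / 2" unfolding assms(4,5) .
    have "\<bar>\<epsilon> / (2 * K) * ev e z\<bar> < \<epsilon> / 2"
    proof -
      have "\<bar>\<epsilon> / (2 * K) * ev e z\<bar> = \<epsilon> / (2 * K) * \<bar>ev e z\<bar>" using K0 assms(6) by (simp add: abs_mult)
      also have "\<dots> < \<epsilon> / (2 * K) * K" using lt K0 assms(6) by (intro mult_strict_left_mono) auto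
      also have "\<dots> = \<epsilon> / 2" using K0 by simp
      finally show ?thesis .
    qed
    then show "0 < z p \<and> z p < \<epsilon>" unfolding zp by linarith
  qed
  {
    case (Cst c) then have "q = p" by simp
    then show ?case using root[OF Cst.prems(3,4,5)] by simp
  next
    case (Var j) then have "q = p" by simp
    then show ?case using root[OF Var.prems(3,4,5)] by simp
  next
    case (Ad e1 e2)
    have b1: "bnd e1 \<le> K" "bnd e2 \<le> K" using Ad.prems(5) bnd_ge1[of e1] bnd_ge1[of e2] by auto
    show ?case
    proof (cases "q = p")
      case True then show ?thesis using root[OF Ad.prems(3,4,5)] by simp
    next
      case False
      then have "(p+1 \<le> q \<and> q < p+1+sz e1) \<or> (p+1+sz e1 \<le> q \<and> q < p+1+sz e1+sz e2)"
        using Ad.prems by auto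
      then show ?thesis
      proof
        assume "p+1 \<le> q \<and> q < p+1+sz e1"
        then show ?thesis using Ad.prems b1 by (intro Ad.IH(1)[of "p+1"]) auto
      next
        assume "p+1+sz e1 \<le> q \<and> q < p+1+sz e1+sz e2"
        then show ?thesis using Ad.prems b1 by (intro Ad.IH(2)[of "p+1+sz e1"]) auto
      qed
    qed
  next
    case (Mu e1 e2)
    have m: "bnd e1 * bnd e2 \<le> K" "1 \<le> bnd e1" "1 \<le> bnd e2" using Mu.prems(5) bnd_ge1[of e1] bnd_ge1[of e2] by auto
    have "bnd e1 \<le> bnd e1 * bnd e2" using m mult_left_mono[of 1 "bnd e2" "bnd e1"] by simp
    moreover have "bnd e2 \<le> bnd e1 * bnd e2" using m mult_right_mono[of 1 "bnd e1" "bnd e2"] by simp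
    ultimately have b1: "bnd e1 \<le> K" "bnd e2 \<le> K" using m by linarith+
    show ?case
    proof (cases "q = p")
      case True then show ?thesis using root[OF Mu.prems(3,4,5)] by simp
    next
      case False
      then have "(p+1 \<le> q \<and> q < p+1+sz e1) \<or> (p+1+sz e1 \<le> q \<and> q < p+1+sz e1+sz e2)"
        using Mu.prems by auto
      then show ?thesis
      proof
        assume "p+1 \<le> q \<and> q < p+1+sz e1"
        then show ?thesis using Mu.prems b1 by (intro Mu.IH(1)[of "p+1"]) auto
      next
        assume "p+1+sz e1 \<le> q \<and> q < p+1+sz e1+sz e2"
        then show ?thesis using Mu.prems b1 by (intro Mu.IH(2)[of "p+1+sz e1"]) auto
      qed
    qed
  }
qed


lemma prof_0: "profiles 0 d = {\<lambda>_. 0}"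
  unfolding profiles_def by auto

lemma prof_Suc: "profiles (Suc N) d = (\<lambda>(s,j). s(N := j)) ` (profiles N d \<times> {..d N})"
proof
  show "profiles (Suc N) d \<subseteq> (\<lambda>(s,j). s(N := j)) ` (profiles N d \<times> {..d N})"
  proof
    fix s assume s: "s \<in> profiles (Suc N) d"
    have "s(N := 0) \<in> profiles N d" using s unfolding profiles_def by auto
    moreover have "s N \<in> {..d N}" using s unfolding profiles_def by auto
    ultimately have m: "(s(N := 0), s N) \<in> profiles N d \<times> {..d N}" by auto
    have e: "s = (\<lambda>(s,j). s(N := j)) (s(N := 0), s N)" by simp
    show "s \<in> (\<lambda>(s,j). s(N := j)) ` (profiles N d \<times> {..d N})" using image_eqI[where f="\<lambda>(s,j). s(N := j)" and x="(s(N := 0), s N)", OF e m] .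
  qed
next
  show "(\<lambda>(s,j). s(N := j)) ` (profiles N d \<times> {..d N}) \<subseteq> profiles (Suc N) d"
    unfolding profiles_def by (auto simp: less_Suc_eq)
qed

lemma prof_inj: "inj_on (\<lambda>(s,j). s(N := j)) (profiles N d \<times> {..d N})"
proof (rule inj_onI, clarsimp)
  fix s j s' j' assume s: "s \<in> profiles N d" "s' \<in> profiles N d" and e: "s(N := j) = s'(N := j')"
  have "j = j'" using fun_cong[OF e, of N] by simp
  moreover have "s = s'"
  proof
    fix l show "s l = s' l"
    proof (cases "l = N")
      case True then show ?thesis using s unfolding profiles_def by auto
    next
      case False then show ?thesis using fun_cong[OF e, of l] by simp
    qed
  qed
  ultimately show "s = s' \<and> j = j'" by simp
qed

lemma prof_finite: "finite (profiles N d)"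
  by (induction N) (auto simp: prof_0 prof_Suc)

lemma PS: "(\<Sum>s\<in>profiles N d. \<Prod>l<N. G l (s l)) = (\<Prod>l<N. \<Sum>j\<le>d l. G l j :: real)"
proof (induction N)
  case 0 then show ?case by (simp add: prof_0)
next
  case (Suc N)
  have "(\<Sum>s\<in>profiles (Suc N) d. \<Prod>l<Suc N. G l (s l))
      = (\<Sum>p\<in>profiles N d \<times> {..d N}. \<Prod>l<Suc N. G l (((fst p)(N := snd p)) l))"
    unfolding prof_Suc by (subst sum.reindex[OF prof_inj]) (simp add: case_prod_beta)
  also have "\<dots> = (\<Sum>s\<in>profiles N d. \<Sum>j\<le>d N. \<Prod>l<Suc N. G l ((s(N := j)) l))"
    unfolding sum.cartesian_product by (simp add: case_prod_beta)
  also have "\<dots> = (\<Sum>s\<in>profiles N d. \<Sum>j\<le>d N. (\<Prod>l<N. G l (s l)) * G N j)"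
  proof (intro sum.cong refl)
    fix s j
    have "(\<Prod>l<N. G l ((s(N := j)) l)) = (\<Prod>l<N. G l (s l))" by (intro prod.cong) auto
    then show "(\<Prod>l<Suc N. G l ((s(N := j)) l)) = (\<Prod>l<N. G l (s l)) * G N j" by simp
  qed
  also have "\<dots> = (\<Sum>s\<in>profiles N d. \<Prod>l<N. G l (s l)) * (\<Sum>j\<le>d N. G N j)"
    by (rule sum_product[symmetric])
  also have "\<dots> = (\<Prod>l<Suc N. \<Sum>j\<le>d l. G l j)" using Suc by simp
  finally show ?case .
qed

definition ind :: "nat \<Rightarrow> nat \<Rightarrow> real" where "ind k j = (if j = k then 1 else 0)"

lemma L1:
  assumes "i < N" "j \<le> d i"
  shows "(\<Sum>s\<in>{s\<in>profiles N d. s i = j}. \<Prod>l\<in>{..<N}-{i}. F l (s l))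
       = (\<Prod>l\<in>{..<N}-{i}. \<Sum>j'\<le>d l. F l j' :: real)"
proof -
  define G where "G l = (if l = i then ind j else F l)" for l
  have 1: "(\<Prod>l<N. G l (s l)) = ind j (s i) * (\<Prod>l\<in>{..<N}-{i}. F l (s l))" for s
  proof -
    have "(\<Prod>l<N. G l (s l)) = G i (s i) * (\<Prod>l\<in>{..<N}-{i}. G l (s l))"
      using assms(1) by (simp add: prod.remove)
    also have "(\<Prod>l\<in>{..<N}-{i}. G l (s l)) = (\<Prod>l\<in>{..<N}-{i}. F l (s l))"
      by (intro prod.cong) (auto simp: G_def)
    finally show ?thesis by (simp add: G_def)
  qed
  have 2: "(\<Prod>l<N. \<Sum>j'\<le>d l. G l j') = (\<Sum>j'\<le>d i. ind j j') * (\<Prod>l\<in>{..<N}-{i}. \<Sum>j'\<le>d l. F l j')"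
  proof -
    have "(\<Prod>l<N. \<Sum>j'\<le>d l. G l j') = (\<Sum>j'\<le>d i. G i j') * (\<Prod>l\<in>{..<N}-{i}. \<Sum>j'\<le>d l. G l j')"
      using assms(1) by (simp add: prod.remove)
    also have "(\<Prod>l\<in>{..<N}-{i}. \<Sum>j'\<le>d l. G l j') = (\<Prod>l\<in>{..<N}-{i}. \<Sum>j'\<le>d l. F l j')"
      by (intro prod.cong) (auto simp: G_def)
    finally show ?thesis by (simp add: G_def)
  qed
  have 3: "(\<Sum>j'\<le>d i. ind j j') = 1" using assms(2) by (simp add: ind_def)
  have "(\<Sum>s\<in>{s\<in>profiles N d. s i = j}. \<Prod>l\<in>{..<N}-{i}. F l (s l))
      = (\<Sum>s\<in>profiles N d. ind j (s i) * (\<Prod>l\<in>{..<N}-{i}. F l (s l)))"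
    by (subst sum.inter_filter[OF prof_finite]) (intro sum.cong refl, simp add: ind_def)
  also have "\<dots> = (\<Sum>s\<in>profiles N d. \<Prod>l<N. G l (s l))" by (simp add: 1)
  also have "\<dots> = (\<Prod>l<N. \<Sum>j'\<le>d l. G l j')" by (rule PS)
  finally show ?thesis using 2 3 by simp
qed

lemma sum_list_sum_swap:
  "(\<Sum>s\<in>A. sum_list (map (\<lambda>t. f t s) xs)) = sum_list (map (\<lambda>t. \<Sum>s\<in>A. f t s) xs)"
  by (induction xs) (auto simp: sum.distrib)

lemma sum_list_mult_r: "sum_list (map f xs) * (c::real) = sum_list (map (\<lambda>x. f x * c) xs)"
  by (induction xs) (auto simp: algebra_simps)

definition upay :: "nat \<Rightarrow> (nat \<Rightarrow> (real \<times> (nat \<Rightarrow> nat \<Rightarrow> real)) list) \<Rightarrow> nat \<Rightarrow> (nat \<Rightarrow> nat) \<Rightarrow> real" where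
  "upay N ts i s = (\<Sum>(w,R)\<leftarrow>ts i. w * (\<Prod>l<N. R l (s l)))"

lemma dev_upay:
  assumes "i < N" "j \<le> d i"
  shows "dev_payoff N d (upay N ts) \<sigma> i j
       = (\<Sum>(w,R)\<leftarrow>ts i. w * R i j * (\<Prod>l\<in>{..<N}-{i}. \<Sum>j'\<le>d l. R l j' * \<sigma> l j'))"
proof -
  let ?A = "{s\<in>profiles N d. s i = j}"
  have "dev_payoff N d (upay N ts) \<sigma> i j
     = (\<Sum>s\<in>?A. (\<Sum>(w,R)\<leftarrow>ts i. w * (\<Prod>l<N. R l (s l))) * (\<Prod>l\<in>{..<N}-{i}. \<sigma> l (s l)))"
    unfolding dev_payoff_def upay_def by simp
  also have "\<dots> = (\<Sum>s\<in>?A. (\<Sum>(w,R)\<leftarrow>ts i. w * R i j * (\<Prod>l\<in>{..<N}-{i}. R l (s l) * \<sigma> l (s l))))"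
  proof (intro sum.cong refl)
    fix s assume s: "s \<in> ?A"
    have H: "\<And>R. (\<Prod>l<N. R l (s l)) = R i j * (\<Prod>l\<in>{..<N}-{i}. R l (s l))"
      using assms(1) s by (simp add: prod.remove)
    then show "(\<Sum>(w,R)\<leftarrow>ts i. w * (\<Prod>l<N. R l (s l))) * (\<Prod>l\<in>{..<N}-{i}. \<sigma> l (s l))
      = (\<Sum>(w,R)\<leftarrow>ts i. w * R i j * (\<Prod>l\<in>{..<N}-{i}. R l (s l) * \<sigma> l (s l)))"
      unfolding sum_list_mult_r
      apply (intro arg_cong[where f=sum_list] map_cong refl)
      subgoal for t by (cases t) (simp only: H prod.distrib mult_ac split)
      done
  qed
  also have "\<dots> = (\<Sum>(w,R)\<leftarrow>ts i. \<Sum>s\<in>?A. w * R i j * (\<Prod>l\<in>{..<N}-{i}. R l (s l) * \<sigma> l (s l)))"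
    unfolding case_prod_beta by (rule sum_list_sum_swap)
  also have "\<dots> = (\<Sum>(w,R)\<leftarrow>ts i. w * R i j * (\<Prod>l\<in>{..<N}-{i}. \<Sum>j'\<le>d l. R l j' * \<sigma> l j'))"
    apply (intro arg_cong[where f=sum_list] map_cong refl)
    subgoal for t
    proof (cases t)
      case (Pair w R)
      have "(\<Sum>s\<in>?A. w * R i j * (\<Prod>l\<in>{..<N}-{i}. R l (s l) * \<sigma> l (s l)))
          = w * R i j * (\<Sum>s\<in>?A. (\<Prod>l\<in>{..<N}-{i}. R l (s l) * \<sigma> l (s l)))"
        by (simp add: sum_distrib_left)
      also have "\<dots> = w * R i j * (\<Prod>l\<in>{..<N}-{i}. \<Sum>j'\<le>d l. R l j' * \<sigma> l j')"
        using L1[where i=i and N=N and d=d and j=j and F="\<lambda>l j'. R l j' * \<sigma> l j'", OF assms] by simp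
      finally show ?thesis using Pair by simp
    qed
    done
  finally show ?thesis .
qed

lemma strat_sum:
  "(\<Sum>j\<le>d i. strat_of_coords d y i j) = 1"
proof -
  have "{..d i} = insert 0 {1..d i}" by auto
  moreover have "{1..d i} \<inter> - {0} = {1..d i}" by auto
  ultimately show ?thesis unfolding strat_of_coords_def by (simp add: sum.If_cases)
qed

lemma prod_if_in:
  assumes "finite P" "A \<subseteq> P"
  shows "(\<Prod>p\<in>P. if p \<in> A then f p else 1) = (\<Prod>p\<in>A. f p :: real)"
  using assms by (simp add: prod.If_cases Int_absorb1)


definition rs :: "nat \<Rightarrow> (nat \<Rightarrow> real) \<Rightarrow> (nat \<Rightarrow> real)" where
  "rs k w = (\<lambda>i. if i < k then w i else 0)"
definition sh :: "nat \<Rightarrow> (nat \<Rightarrow> real) \<Rightarrow> (nat \<Rightarrow> real)" where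
  "sh k w = (\<lambda>i. w (k + i))"

lemma rs_Rk: "rs k w \<in> Rk k" unfolding rs_def Rk_def by auto
lemma sh_Rk: "w \<in> Rk (k + m) \<Longrightarrow> sh k w \<in> Rk m" unfolding sh_def Rk_def by auto
lemma rs_join: "x \<in> Rk k \<Longrightarrow> rs k (join k x z) = x"
  unfolding rs_def join_def Rk_def by auto
lemma sh_join: "sh k (join k x z) = z"
  unfolding sh_def join_def by auto
lemma join_Rk: "x \<in> Rk k \<Longrightarrow> z \<in> Rk m \<Longrightarrow> join k x z \<in> Rk (k + m)"
  unfolding join_def Rk_def by auto
lemma join_rs_sh: "w \<in> Rk (k + m) \<Longrightarrow> join k (rs k w) (sh k w) = w"
  unfolding join_def rs_def sh_def by auto

lemma poly_fn_rs: "poly_fn p \<Longrightarrow> poly_fn (\<lambda>w. p (rs k w))"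
proof (erule poly_fn_comp)
  fix i show "poly_fn (\<lambda>x. rs k x i)"
    unfolding rs_def by (cases "i < k") (simp_all add: poly_fn.coord poly_fn.const)
qed

lemma poly_fn_sh: "poly_fn p \<Longrightarrow> poly_fn (\<lambda>w. p (sh k w))"
  by (erule poly_fn_comp) (simp add: sh_def poly_fn.coord)

lemma iso_intro:
  assumes "semialg k S" "semialg m T" "continuous_on S f" "continuous_on T g"
    "f ` S \<subseteq> T" "g ` T \<subseteq> S" "\<And>x. x \<in> S \<Longrightarrow> g (f x) = x" "\<And>y. y \<in> T \<Longrightarrow> f (g y) = y"
    "semialg (k + m) {join k x (f x) | x. x \<in> S}"
  shows "stably_iso (k, S) (m, T)"
proof (rule stably_iso.iso)
  have "homeomorphism S T f g"
    unfolding homeomorphism_def using assms(3-8) by (auto simp: image_iff) (metis image_subset_iff)+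
  then show "semialg_iso k S m T" unfolding semialg_iso_def using assms(1,2,9) by blast
qed

lemma graph_char:
  assumes "S \<subseteq> Rk k" "T \<subseteq> Rk m" "f ` S \<subseteq> T" "g ` T \<subseteq> S"
    "\<And>y. y \<in> T \<Longrightarrow> f (g y) = y" "\<And>x. x \<in> S \<Longrightarrow> g (f x) = x"
    "\<And>x z. x \<in> Rk k \<Longrightarrow> z \<in> Rk m \<Longrightarrow> P x z \<longleftrightarrow> (z \<in> T \<and> x = g z)"
  shows "{join k x (f x) | x. x \<in> S} = {w \<in> Rk (k + m). P (rs k w) (sh k w)}"
proof
  show "{join k x (f x) | x. x \<in> S} \<subseteq> {w \<in> Rk (k + m). P (rs k w) (sh k w)}"
  proof clarify
    fix x assume x: "x \<in> S"
    have xk: "x \<in> Rk k" and fx: "f x \<in> T" "f x \<in> Rk m" using x assms(1-3) by auto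
    show "join k x (f x) \<in> Rk (k + m) \<and> P (rs k (join k x (f x))) (sh k (join k x (f x)))"
      using join_Rk[OF xk fx(2)] rs_join[OF xk] sh_join assms(7)[OF xk fx(2)] fx(1) assms(6)[OF x] by simp
  qed
next
  show "{w \<in> Rk (k + m). P (rs k w) (sh k w)} \<subseteq> {join k x (f x) | x. x \<in> S}"
  proof clarify
    fix w assume w: "w \<in> Rk (k + m)" "P (rs k w) (sh k w)"
    then have zT: "sh k w \<in> T" and xe: "rs k w = g (sh k w)" using assms(7)[OF rs_Rk sh_Rk[OF w(1)]] by auto
    have xS: "rs k w \<in> S" using zT xe assms(4) by auto
    have "f (rs k w) = sh k w" using xe assms(5)[OF zT] by simp
    then have "w = join k (rs k w) (f (rs k w))" using join_rs_sh[OF w(1)] by simp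
    then show "\<exists>x. w = join k x (f x) \<and> x \<in> S" using xS by blast
  qed
qed

lemma semialg_cyl: "semialg m W \<Longrightarrow> semialg (m + r) {y \<in> Rk (m + r). rs m y \<in> W}"
proof (induction rule: semialg.induct)
  case (eq p)
  have "{y \<in> Rk (m + r). rs m y \<in> {x \<in> Rk m. p x = 0}} = {y \<in> Rk (m + r). p (rs m y) = 0}"
    using rs_Rk by auto
  then show ?case using sa_eq[OF poly_fn_rs[OF eq]] by simp
next
  case (gt p)
  have "{y \<in> Rk (m + r). rs m y \<in> {x \<in> Rk m. p x > 0}} = {y \<in> Rk (m + r). 0 < p (rs m y)}"
    using rs_Rk by auto
  then show ?case using sa_gt[OF poly_fn_rs[OF gt]] by simp
next
  case (union S T)
  have "{y \<in> Rk (m + r). rs m y \<in> S \<union> T} = {y \<in> Rk (m + r). rs m y \<in> S} \<union> {y \<in> Rk (m + r). rs m y \<in> T}"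
    by auto
  then show ?case using union semialg.union by simp
next
  case (compl S)
  have "{y \<in> Rk (m + r). rs m y \<in> Rk m - S} = Rk (m + r) - {y \<in> Rk (m + r). rs m y \<in> S}"
    using rs_Rk by auto
  then show ?case using compl semialg.compl by simp
qed

lemma cyl_eq: "cyl m W r = {y \<in> Rk (m + r). rs m y \<in> W}"
  unfolding cyl_def rs_def by simp

definition Gf :: "real \<Rightarrow> real" where "Gf v = (v + sqrt (v\<^sup>2 + 4)) / 2"

lemma sqrt_gt: "\<bar>v\<bar> < sqrt (v\<^sup>2 + 4)"
proof -
  have "sqrt (v\<^sup>2) < sqrt (v\<^sup>2 + 4)" by (intro real_sqrt_less_mono) simp
  then show ?thesis by simp
qed

lemma Gf_pos: "0 < Gf v"
proof -
  have "0 < v + sqrt (v\<^sup>2 + 4)" using sqrt_gt[of v] abs_ge_minus_self[of v] by linarith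
  then show ?thesis unfolding Gf_def by simp
qed

lemma Gf_inv: "Gf v - 1 / Gf v = v"
proof -
  let ?s = "sqrt (v\<^sup>2 + 4)"
  have s2: "?s * ?s = v\<^sup>2 + 4" by (simp add: power2_eq_square[symmetric])
  have p: "0 < v + ?s" using sqrt_gt[of v] abs_ge_minus_self[of v] by linarith
  have m: "(?s - v) * (v + ?s) = 4" using s2 by (simp add: algebra_simps power2_eq_square)
  have h: "2 / (v + ?s) = (?s - v) / 2" using p m by (simp add: field_simps)
  have "1 / Gf v = 2 / (v + ?s)" unfolding Gf_def by simp
  then have e1: "1 / Gf v = (?s - v) / 2" using h by linarith
  have "Gf v - 1 / Gf v = (v + ?s) / 2 - (?s - v) / 2" unfolding e1 by (simp add: Gf_def)
  also have "\<dots> = v" by (simp add: field_simps)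
  finally show ?thesis .
qed

lemma Gf_inv2: "0 < u \<Longrightarrow> Gf (u - 1 / u) = u"
proof -
  assume u: "0 < u"
  have "(u - 1 / u)\<^sup>2 + 4 = (u + 1 / u)\<^sup>2" using u by (simp add: power2_eq_square field_simps)
  moreover have "0 \<le> u + 1 / u" using u by simp
  ultimately have "sqrt ((u - 1 / u)\<^sup>2 + 4) = u + 1 / u" by simp
  then show ?thesis unfolding Gf_def by simp
qed

lemma Gf_cont: "continuous_on S g \<Longrightarrow> continuous_on S (\<lambda>x. Gf (g x))"
  unfolding Gf_def by (intro continuous_intros) auto

lemma cont_coord: "continuous_on S (\<lambda>x. x i :: real)"
  by (rule continuous_on_subset[OF continuous_on_product_coordinates subset_UNIV])


lemma poly_fn_rsi: "poly_fn (\<lambda>w. rs K w i)"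
  unfolding rs_def by (cases "i < K") (simp_all add: poly_fn.coord poly_fn.const)
lemma poly_fn_shi: "poly_fn (\<lambda>w. sh K w i)"
  unfolding sh_def by (simp add: poly_fn.coord)

lemma semialg_shcyl: "semialg m T \<Longrightarrow> semialg (K + m) {w \<in> Rk (K + m). sh K w \<in> T}"
proof (induction rule: semialg.induct)
  case (eq p)
  have "{w \<in> Rk (K + m). sh K w \<in> {x \<in> Rk m. p x = 0}} = {w \<in> Rk (K + m). p (sh K w) = 0}"
    using sh_Rk by auto
  then show ?case using sa_eq[OF poly_fn_sh[OF eq]] by simp
next
  case (gt p)
  have "{w \<in> Rk (K + m). sh K w \<in> {x \<in> Rk m. p x > 0}} = {w \<in> Rk (K + m). 0 < p (sh K w)}"
    using sh_Rk by auto
  then show ?case using sa_gt[OF poly_fn_sh[OF gt]] by simp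
next
  case (union S T)
  have "{w \<in> Rk (K + m). sh K w \<in> S \<union> T} = {w \<in> Rk (K + m). sh K w \<in> S} \<union> {w \<in> Rk (K + m). sh K w \<in> T}"
    by auto
  then show ?case using union semialg.union by simp
next
  case (compl S)
  have "{w \<in> Rk (K + m). sh K w \<in> Rk m - S} = Rk (K + m) - {w \<in> Rk (K + m). sh K w \<in> S}"
    using sh_Rk by auto
  then show ?case using compl semialg.compl by simp
qed

lemmas pf_intros = poly_fn.const poly_fn.coord poly_fn_rsi poly_fn_shi poly_fn.add poly_fn.mult poly_fn_sub poly_fn_pow

definition fB :: "nat \<Rightarrow> nat \<Rightarrow> (nat \<Rightarrow> real) \<Rightarrow> (nat \<Rightarrow> real)" where
  "fB m r x = (\<lambda>i. if i < m then x i else if i < m + r then Gf (x i) / (1 + Gf (x i)) else 0)"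
definition gB :: "nat \<Rightarrow> nat \<Rightarrow> (nat \<Rightarrow> real) \<Rightarrow> (nat \<Rightarrow> real)" where
  "gB m r y = (\<lambda>i. if i < m then y i else if i < m + r then y i / (1 - y i) - (1 - y i) / y i else 0)"

definition TB :: "nat \<Rightarrow> (nat \<Rightarrow> real) set \<Rightarrow> nat \<Rightarrow> (nat \<Rightarrow> real) set" where
  "TB m W r = {y \<in> Rk (m + r). rs m y \<in> W \<and> (\<forall>k<r. 0 < y (m + k) \<and> y (m + k) < 1)}"

lemma semialg_TB: "semialg m W \<Longrightarrow> semialg (m + r) (TB m W r)"
  unfolding TB_def
  by (intro sa_conj semialg_cyl sa_all_less sa_lt pf_intros)

lemma rs_fB: "rs m (fB m r x) = rs m x" unfolding rs_def fB_def by auto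
lemma rs_gB: "rs m (gB m r x) = rs m x" unfolding rs_def gB_def by auto

lemma dummy_box_iso:
  assumes W: "semialg m W"
  shows "stably_iso (m + r, cyl m W r) (m + r, TB m W r)"
proof (rule iso_intro)
  let ?S = "cyl m W r" and ?T = "TB m W r"
  show sS: "semialg (m + r) ?S" unfolding cyl_eq by (rule semialg_cyl[OF W])
  show sT: "semialg (m + r) ?T" by (rule semialg_TB[OF W])
  show "continuous_on ?S (fB m r)"
  proof (rule continuous_on_coordinatewise_then_product)
    fix i
    have "continuous_on ?S (\<lambda>x. Gf (x i) / (1 + Gf (x i)))"
    proof -
      have nz: "1 + Gf v \<noteq> 0" for v using Gf_pos[of v] by linarith
      show ?thesis using nz by (intro continuous_intros Gf_cont cont_coord) auto
    qed
    then show "continuous_on ?S (\<lambda>x. fB m r x i)"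
      unfolding fB_def by (cases "i < m"; cases "i < m + r") (simp_all add: cont_coord)
  qed
  show "continuous_on ?T (gB m r)"
  proof (rule continuous_on_coordinatewise_then_product)
    fix i
    show "continuous_on ?T (\<lambda>y. gB m r y i)"
    proof (cases "i < m")
      case True then show ?thesis unfolding gB_def by (simp add: cont_coord)
    next
      case False
      show ?thesis
      proof (cases "i < m + r")
        case True
        then obtain k where k: "i = m + k" "k < r" using False by (metis add_diff_inverse_nat nat_add_left_cancel_less)
        have "\<forall>y\<in>?T. 0 < y i \<and> y i < 1" unfolding TB_def using k by auto
        then have "continuous_on ?T (\<lambda>y. y i / (1 - y i) - (1 - y i) / y i)"
          by (intro continuous_intros cont_coord) auto
        then show ?thesis unfolding gB_def using False True by simp
      next
        case False2: False
        then show ?thesis unfolding gB_def using False by (simp add: continuous_on_const)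
      qed
    qed
  qed
  have G1: "0 < Gf v / (1 + Gf v)" "Gf v / (1 + Gf v) < 1" for v
    using Gf_pos[of v] by (auto simp: field_simps)
  show "fB m r ` ?S \<subseteq> ?T"
  proof clarify
    fix x assume x: "x \<in> ?S"
    have "fB m r x \<in> Rk (m + r)" unfolding fB_def Rk_def by auto
    moreover have "rs m (fB m r x) \<in> W" using x unfolding rs_fB cyl_eq by auto
    moreover have "\<forall>k<r. 0 < fB m r x (m + k) \<and> fB m r x (m + k) < 1"
      unfolding fB_def using G1 by simp
    ultimately show "fB m r x \<in> ?T" unfolding TB_def by simp
  qed
  show "gB m r ` ?T \<subseteq> ?S"
  proof clarify
    fix y assume y: "y \<in> ?T"
    have "gB m r y \<in> Rk (m + r)" unfolding gB_def Rk_def by auto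
    moreover have "rs m (gB m r y) \<in> W" using y unfolding rs_gB TB_def by auto
    ultimately show "gB m r y \<in> ?S" unfolding cyl_eq by simp
  qed
  have gf: "gB m r (fB m r x) = x" if x: "x \<in> Rk (m + r)" for x
  proof
    fix i
    show "gB m r (fB m r x) i = x i"
    proof (cases "i < m")
      case True then show ?thesis unfolding gB_def fB_def by simp
    next
      case False
      show ?thesis
      proof (cases "i < m + r")
        case True
        let ?G = "Gf (x i)"
        have p: "0 < ?G" by (rule Gf_pos)
        have a: "1 - ?G / (1 + ?G) = 1 / (1 + ?G)" using p by (simp add: field_simps)
        have b: "?G / (1 + ?G) / (1 / (1 + ?G)) = ?G" using p by (simp add: field_simps)
        have c: "(1 / (1 + ?G)) / (?G / (1 + ?G)) = 1 / ?G" using p by (simp add: field_simps)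
        have "?G / (1 + ?G) / (1 - ?G / (1 + ?G)) - (1 - ?G / (1 + ?G)) / (?G / (1 + ?G)) = ?G - 1 / ?G"
          unfolding a b c ..
        then show ?thesis unfolding gB_def fB_def using False True Gf_inv by simp
      next
        case False2: False
        then show ?thesis using x False unfolding gB_def fB_def Rk_def by simp
      qed
    qed
  qed
  show "\<And>x. x \<in> ?S \<Longrightarrow> gB m r (fB m r x) = x" using gf unfolding cyl_eq by blast
  have fg: "fB m r (gB m r y) = y" if y: "y \<in> ?T" for y
  proof
    fix i
    show "fB m r (gB m r y) i = y i"
    proof (cases "i < m")
      case True then show ?thesis unfolding gB_def fB_def by simp
    next
      case False
      show ?thesis
      proof (cases "i < m + r")
        case True
        then obtain k where k: "i = m + k" "k < r" using False by (metis add_diff_inverse_nat nat_add_left_cancel_less)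
        have D: "0 < y i" "y i < 1" using y k unfolding TB_def by auto
        let ?u = "y i / (1 - y i)"
        have u: "0 < ?u" using D by simp
        have "y i / (1 - y i) - (1 - y i) / y i = ?u - 1 / ?u" by simp
        then have "Gf (y i / (1 - y i) - (1 - y i) / y i) = ?u" using Gf_inv2[OF u] by simp
        moreover have "?u / (1 + ?u) = y i" using D by (simp add: field_simps)
        ultimately show ?thesis unfolding gB_def fB_def using False True by simp
      next
        case False2: False
        then show ?thesis using y False unfolding gB_def fB_def TB_def Rk_def by simp
      qed
    qed
  qed
  show "\<And>y. y \<in> ?T \<Longrightarrow> fB m r (gB m r y) = y" using fg by blast
  define P where "P x z \<longleftrightarrow> z \<in> ?T \<and> (\<forall>i<m. x i = z i) \<and>
      (\<forall>k<r. x (m + k) * (z (m + k) * (1 - z (m + k))) = z (m + k) ^ 2 - (1 - z (m + k)) ^ 2)" for x z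
  have Pc: "P x z \<longleftrightarrow> (z \<in> ?T \<and> x = gB m r z)" if x: "x \<in> Rk (m + r)" and z: "z \<in> Rk (m + r)" for x z
  proof
    assume H: "P x z"
    then have zT: "z \<in> ?T" unfolding P_def by simp
    have "x = gB m r z"
    proof
      fix i
      show "x i = gB m r z i"
      proof (cases "i < m")
        case True then show ?thesis using H unfolding P_def gB_def by simp
      next
        case False
        show ?thesis
        proof (cases "i < m + r")
          case True
          then obtain k where k: "i = m + k" "k < r" using False by (metis add_diff_inverse_nat nat_add_left_cancel_less)
          have D: "0 < z i" "z i < 1" using zT k unfolding TB_def by auto
          have "x i * (z i * (1 - z i)) = z i ^ 2 - (1 - z i) ^ 2" using H k unfolding P_def by simp
          then have "x i = z i / (1 - z i) - (1 - z i) / z i" using D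
            by (simp add: field_simps power2_eq_square)
          then show ?thesis unfolding gB_def using False True by simp
        next
          case False2: False
          then show ?thesis using x unfolding gB_def Rk_def by simp
        qed
      qed
    qed
    then show "z \<in> ?T \<and> x = gB m r z" using zT by simp
  next
    assume H: "z \<in> ?T \<and> x = gB m r z"
    have "x (m + k) * (z (m + k) * (1 - z (m + k))) = z (m + k) ^ 2 - (1 - z (m + k)) ^ 2" if k: "k < r" for k
    proof -
      have D: "0 < z (m + k)" "z (m + k) < 1" using H k unfolding TB_def by auto
      have "x (m + k) = z (m + k) / (1 - z (m + k)) - (1 - z (m + k)) / z (m + k)"
        using H k unfolding gB_def by simp
      then show ?thesis using D by (simp add: field_simps power2_eq_square)
    qed
    then show "P x z" using H unfolding P_def gB_def by simp
  qed
  have "{join (m + r) x (fB m r x) |x. x \<in> ?S} = {w \<in> Rk (m + r + (m + r)). P (rs (m + r) w) (sh (m + r) w)}"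
  proof (rule graph_char[where P=P])
    show "?S \<subseteq> Rk (m + r)" "?T \<subseteq> Rk (m + r)" using semialg_sub[OF sS] semialg_sub[OF sT] .
    show "fB m r ` ?S \<subseteq> ?T" "gB m r ` ?T \<subseteq> ?S" by fact+
    show "\<And>y. y \<in> ?T \<Longrightarrow> fB m r (gB m r y) = y" using fg by blast
    show "\<And>x. x \<in> ?S \<Longrightarrow> gB m r (fB m r x) = x" using gf unfolding cyl_eq by blast
    show "\<And>x z. x \<in> Rk (m + r) \<Longrightarrow> z \<in> Rk (m + r) \<Longrightarrow> P x z \<longleftrightarrow> (z \<in> ?T \<and> x = gB m r z)"
      by (rule Pc)
  qed
  also have "semialg (m + r + (m + r)) \<dots>"
  proof -
    have e: "{w \<in> Rk (m + r + (m + r)). P (rs (m + r) w) (sh (m + r) w)} =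
       {w \<in> Rk (m + r + (m + r)). sh (m + r) w \<in> ?T \<and> ((\<forall>i<m. rs (m + r) w i = sh (m + r) w i) \<and>
      (\<forall>k<r. rs (m + r) w (m + k) * (sh (m + r) w (m + k) * (1 - sh (m + r) w (m + k))) = sh (m + r) w (m + k) ^ 2 - (1 - sh (m + r) w (m + k)) ^ 2))}"
      unfolding P_def by simp
    show ?thesis unfolding e
      by (intro sa_conj semialg_shcyl sT sa_all_less sa_eq2 pf_intros)
  qed
  finally show "semialg (m + r + (m + r)) {join (m + r) x (fB m r x) |x. x \<in> ?S}" .
qed


lemma psum: "poly_fn (\<lambda>y. \<Sum>k<r. y (m + k) :: real)"
  by (rule poly_fn_sum) (auto intro: poly_fn.coord)
lemma psum_sh: "poly_fn (\<lambda>w. \<Sum>k<r. sh K w (m + k) :: real)"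
  by (rule poly_fn_sum) (auto intro: poly_fn_shi)

lemmas pf_intros2 = pf_intros psum psum_sh

definition fS :: "nat \<Rightarrow> nat \<Rightarrow> (nat \<Rightarrow> real) \<Rightarrow> (nat \<Rightarrow> real)" where
  "fS m r x = (\<lambda>i. if i < m then x i else if i < m + r then Gf (x i) / (1 + (\<Sum>l<r. Gf (x (m + l)))) else 0)"
definition gS :: "nat \<Rightarrow> nat \<Rightarrow> (nat \<Rightarrow> real) \<Rightarrow> (nat \<Rightarrow> real)" where
  "gS m r y = (\<lambda>i. if i < m then y i else if i < m + r then
      y i / (1 - (\<Sum>l<r. y (m + l))) - (1 - (\<Sum>l<r. y (m + l))) / y i else 0)"

definition TS :: "nat \<Rightarrow> (nat \<Rightarrow> real) set \<Rightarrow> nat \<Rightarrow> (nat \<Rightarrow> real) set" where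
  "TS m W r = {y \<in> Rk (m + r). rs m y \<in> W \<and> ((\<forall>k<r. 0 < y (m + k)) \<and> (\<Sum>k<r. y (m + k)) < 1)}"

lemma semialg_TS: "semialg m W \<Longrightarrow> semialg (m + r) (TS m W r)"
  unfolding TS_def
  apply (rule sa_conj) apply (erule semialg_cyl)
  by (intro sa_conj semialg_cyl sa_all_less sa_lt pf_intros2)

lemma rs_fS: "rs m (fS m r x) = rs m x" unfolding rs_def fS_def by auto
lemma rs_gS: "rs m (gS m r x) = rs m x" unfolding rs_def gS_def by auto

lemma split_i: "\<not> (i::nat) < m \<Longrightarrow> i < m + r \<Longrightarrow> \<exists>k. i = m + k \<and> k < r"
  by (rule exI[of _ "i - m"]) simp

lemma dummy_simplex_iso:
  assumes W: "semialg m W"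
  shows "stably_iso (m + r, cyl m W r) (m + r, TS m W r)"
proof (rule iso_intro)
  let ?S = "cyl m W r" and ?T = "TS m W r"
  show sS: "semialg (m + r) ?S" unfolding cyl_eq by (rule semialg_cyl[OF W])
  show sT: "semialg (m + r) ?T" by (rule semialg_TS[OF W])
  have Sg: "0 \<le> (\<Sum>l<r. Gf (x (m + l)))" for x using Gf_pos by (intro sum_nonneg) (simp add: less_imp_le)
  show "continuous_on ?S (fS m r)"
  proof (rule continuous_on_coordinatewise_then_product)
    fix i
    have nz: "1 + (\<Sum>l<r. Gf (x (m + l))) \<noteq> 0" for x using Sg[of x] by linarith
    have "continuous_on ?S (\<lambda>x. Gf (x i) / (1 + (\<Sum>l<r. Gf (x (m + l)))))"
      using nz by (intro continuous_intros Gf_cont cont_coord) auto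
    then show "continuous_on ?S (\<lambda>x. fS m r x i)"
      unfolding fS_def by (cases "i < m"; cases "i < m + r") (simp_all add: cont_coord)
  qed
  show "continuous_on ?T (gS m r)"
  proof (rule continuous_on_coordinatewise_then_product)
    fix i
    show "continuous_on ?T (\<lambda>y. gS m r y i)"
    proof (cases "i < m")
      case True then show ?thesis unfolding gS_def by (simp add: cont_coord)
    next
      case False
      show ?thesis
      proof (cases "i < m + r")
        case True
        then obtain k where k: "i = m + k" "k < r" using False split_i by blast
        have "\<forall>y\<in>?T. 0 < y i \<and> (\<Sum>l<r. y (m + l)) < 1" unfolding TS_def using k by auto
        then have "continuous_on ?T (\<lambda>y. y i / (1 - (\<Sum>l<r. y (m + l))) - (1 - (\<Sum>l<r. y (m + l))) / y i)"
          by (intro continuous_intros cont_coord) auto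
        then show ?thesis unfolding gS_def using False True by simp
      next
        case False2: False
        then show ?thesis unfolding gS_def using False by (simp add: continuous_on_const)
      qed
    qed
  qed
  have fsum: "(\<Sum>l<r. fS m r x (m + l)) = (\<Sum>l<r. Gf (x (m + l))) / (1 + (\<Sum>l<r. Gf (x (m + l))))" for x
    unfolding fS_def by (simp add: sum_divide_distrib)
  show "fS m r ` ?S \<subseteq> ?T"
  proof clarify
    fix x assume x: "x \<in> ?S"
    let ?s = "\<Sum>l<r. Gf (x (m + l))"
    have "fS m r x \<in> Rk (m + r)" unfolding fS_def Rk_def by auto
    moreover have "rs m (fS m r x) \<in> W" using x unfolding rs_fS cyl_eq by auto
    moreover have "\<forall>k<r. 0 < fS m r x (m + k)"
      unfolding fS_def using Gf_pos Sg[of x] by (simp add: add_pos_nonneg)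
    moreover have "(\<Sum>k<r. fS m r x (m + k)) < 1" unfolding fsum using Sg[of x] by simp
    ultimately show "fS m r x \<in> ?T" unfolding TS_def by simp
  qed
  show "gS m r ` ?T \<subseteq> ?S"
  proof clarify
    fix y assume y: "y \<in> ?T"
    have "gS m r y \<in> Rk (m + r)" unfolding gS_def Rk_def by auto
    moreover have "rs m (gS m r y) \<in> W" using y unfolding rs_gS TS_def by auto
    ultimately show "gS m r y \<in> ?S" unfolding cyl_eq by simp
  qed
  have gf: "gS m r (fS m r x) = x" if x: "x \<in> Rk (m + r)" for x
  proof
    fix i
    let ?s = "\<Sum>l<r. Gf (x (m + l))"
    have f0: "1 - (\<Sum>l<r. fS m r x (m + l)) = 1 / (1 + ?s)" unfolding fsum using Sg[of x] by (simp add: field_simps)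
    show "gS m r (fS m r x) i = x i"
    proof (cases "i < m")
      case True then show ?thesis unfolding gS_def fS_def by simp
    next
      case False
      show ?thesis
      proof (cases "i < m + r")
        case True
        let ?G = "Gf (x i)"
        have p: "0 < ?G" "0 < 1 + ?s" using Gf_pos Sg[of x] by (auto simp: add_pos_nonneg)
        have fi: "fS m r x i = ?G / (1 + ?s)" unfolding fS_def using False True by simp
        have b: "?G / (1 + ?s) / (1 / (1 + ?s)) = ?G" using p by (simp add: field_simps)
        have c: "(1 / (1 + ?s)) / (?G / (1 + ?s)) = 1 / ?G" using p by (simp add: field_simps)
        have "gS m r (fS m r x) i = fS m r x i / (1 - (\<Sum>l<r. fS m r x (m + l))) - (1 - (\<Sum>l<r. fS m r x (m + l))) / fS m r x i"
          unfolding gS_def using False True by simp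
        also have "\<dots> = ?G - 1 / ?G" unfolding f0 fi b c ..
        finally show ?thesis using Gf_inv by simp
      next
        case False2: False
        then show ?thesis using x False unfolding gS_def fS_def Rk_def by simp
      qed
    qed
  qed
  show "\<And>x. x \<in> ?S \<Longrightarrow> gS m r (fS m r x) = x" using gf unfolding cyl_eq by blast
  have fg: "fS m r (gS m r y) = y" if y: "y \<in> ?T" for y
  proof
    fix i
    let ?y0 = "1 - (\<Sum>l<r. y (m + l))"
    have y0: "0 < ?y0" using y unfolding TS_def by auto
    have yp: "\<And>l. l < r \<Longrightarrow> 0 < y (m + l)" using y unfolding TS_def by auto
    have Gl: "Gf (gS m r y (m + l)) = y (m + l) / ?y0" if l: "l < r" for l
    proof -
      let ?u = "y (m + l) / ?y0"
      have u: "0 < ?u" using y0 yp[OF l] by simp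
      have "gS m r y (m + l) = ?u - 1 / ?u" unfolding gS_def using l by simp
      then show ?thesis using Gf_inv2[OF u] by simp
    qed
    have sG: "1 + (\<Sum>l<r. Gf (gS m r y (m + l))) = 1 / ?y0"
    proof -
      have "(\<Sum>l<r. Gf (gS m r y (m + l))) = (\<Sum>l<r. y (m + l) / ?y0)" using Gl by simp
      also have "\<dots> = (\<Sum>l<r. y (m + l)) / ?y0" by (simp add: sum_divide_distrib)
      finally show ?thesis using y0 by (simp add: field_simps)
    qed
    show "fS m r (gS m r y) i = y i"
    proof (cases "i < m")
      case True then show ?thesis unfolding gS_def fS_def by simp
    next
      case False
      show ?thesis
      proof (cases "i < m + r")
        case True
        then obtain k where k: "i = m + k" "k < r" using False split_i by blast
        have "fS m r (gS m r y) i = Gf (gS m r y (m + k)) / (1 + (\<Sum>l<r. Gf (gS m r y (m + l))))"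
          unfolding fS_def using k by simp
        also have "\<dots> = (y (m + k) / ?y0) / (1 / ?y0)" unfolding sG Gl[OF k(2)] ..
        also have "\<dots> = y i" using y0 k by simp
        finally show ?thesis .
      next
        case False2: False
        then show ?thesis using y False unfolding gS_def fS_def TS_def Rk_def by simp
      qed
    qed
  qed
  define P where "P x z \<longleftrightarrow> z \<in> ?T \<and> (\<forall>i<m. x i = z i) \<and>
      (\<forall>k<r. x (m + k) * (z (m + k) * (1 - (\<Sum>l<r. z (m + l)))) = z (m + k) ^ 2 - (1 - (\<Sum>l<r. z (m + l))) ^ 2)" for x z
  have Pc: "P x z \<longleftrightarrow> (z \<in> ?T \<and> x = gS m r z)" if x: "x \<in> Rk (m + r)" and z: "z \<in> Rk (m + r)" for x z
  proof
    assume H: "P x z"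
    then have zT: "z \<in> ?T" unfolding P_def by simp
    let ?z0 = "1 - (\<Sum>l<r. z (m + l))"
    have z0: "0 < ?z0" using zT unfolding TS_def by auto
    have "x = gS m r z"
    proof
      fix i
      show "x i = gS m r z i"
      proof (cases "i < m")
        case True then show ?thesis using H unfolding P_def gS_def by simp
      next
        case False
        show ?thesis
        proof (cases "i < m + r")
          case True
          then obtain k where k: "i = m + k" "k < r" using False split_i by blast
          have D: "0 < z i" using zT k unfolding TS_def by auto
          have "x i * (z i * ?z0) = z i ^ 2 - ?z0 ^ 2" using H k unfolding P_def by simp
          then have "x i = z i / ?z0 - ?z0 / z i" using D z0
            by (simp add: field_simps power2_eq_square)
          then show ?thesis unfolding gS_def using False True by simp
        next
          case False2: False
          then show ?thesis using x unfolding gS_def Rk_def by simp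
        qed
      qed
    qed
    then show "z \<in> ?T \<and> x = gS m r z" using zT by simp
  next
    assume H: "z \<in> ?T \<and> x = gS m r z"
    let ?z0 = "1 - (\<Sum>l<r. z (m + l))"
    have z0: "0 < ?z0" using H unfolding TS_def by auto
    have "x (m + k) * (z (m + k) * ?z0) = z (m + k) ^ 2 - ?z0 ^ 2" if k: "k < r" for k
    proof -
      have D: "0 < z (m + k)" using H k unfolding TS_def by auto
      have "x (m + k) = z (m + k) / ?z0 - ?z0 / z (m + k)"
        using H k unfolding gS_def by simp
      then show ?thesis using D z0 by (simp add: field_simps power2_eq_square)
    qed
    then show "P x z" using H unfolding P_def gS_def by simp
  qed
  show "\<And>y. y \<in> ?T \<Longrightarrow> fS m r (gS m r y) = y" using fg by blast
  have "{join (m + r) x (fS m r x) |x. x \<in> ?S} = {w \<in> Rk (m + r + (m + r)). P (rs (m + r) w) (sh (m + r) w)}"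
  proof (rule graph_char[where P=P])
    show "?S \<subseteq> Rk (m + r)" "?T \<subseteq> Rk (m + r)" using semialg_sub[OF sS] semialg_sub[OF sT] .
    show "fS m r ` ?S \<subseteq> ?T" "gS m r ` ?T \<subseteq> ?S" by fact+
    show "\<And>y. y \<in> ?T \<Longrightarrow> fS m r (gS m r y) = y" using fg by blast
    show "\<And>x. x \<in> ?S \<Longrightarrow> gS m r (fS m r x) = x" using gf unfolding cyl_eq by blast
    show "\<And>x z. x \<in> Rk (m + r) \<Longrightarrow> z \<in> Rk (m + r) \<Longrightarrow> P x z \<longleftrightarrow> (z \<in> ?T \<and> x = gS m r z)"
      by (rule Pc)
  qed
  also have "semialg (m + r + (m + r)) \<dots>"
  proof -
    have e: "{w \<in> Rk (m + r + (m + r)). P (rs (m + r) w) (sh (m + r) w)} =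
       {w \<in> Rk (m + r + (m + r)). sh (m + r) w \<in> ?T \<and> ((\<forall>i<m. rs (m + r) w i = sh (m + r) w i) \<and>
      (\<forall>k<r. rs (m + r) w (m + k) * (sh (m + r) w (m + k) * (1 - (\<Sum>l<r. sh (m + r) w (m + l)))) = sh (m + r) w (m + k) ^ 2 - (1 - (\<Sum>l<r. sh (m + r) w (m + l))) ^ 2))}"
      unfolding P_def by simp
    show ?thesis unfolding e
      by (intro sa_conj semialg_shcyl sT sa_all_less sa_eq2 pf_intros2)
  qed
  finally show "semialg (m + r + (m + r)) {join (m + r) x (fS m r x) |x. x \<in> ?S}" .
qed


lemma L_a: "0 < G \<Longrightarrow> 0 < e \<Longrightarrow> (e * G / (1 + G)) / (e / (1 + G)) = (G::real)"
proof -
  assume a: "0 < G" "0 < e"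
  have c: "0 < e / (1 + G)" using a by simp
  have "e * G / (1 + G) = G * (e / (1 + G))" by simp
  then show ?thesis using c a by simp
qed
lemma L_b: "0 < G \<Longrightarrow> 0 < e \<Longrightarrow> (e / (1 + G)) / (e * G / (1 + G)) = 1 / (G::real)"
proof -
  assume a: "0 < G" "0 < e"
  have c: "0 < e / (1 + G)" using a by simp
  have "e * G / (1 + G) = G * (e / (1 + G))" by simp
  then show ?thesis using c a by simp
qed
lemma L_c: "0 < G \<Longrightarrow> e * G / (1 + G) + e / (1 + G) = (e::real)"
proof -
  assume a: "0 < G"
  have "e * G / (1 + G) + e / (1 + G) = e * (1 + G) / (1 + G)" by (simp add: add_divide_distrib algebra_simps)
  then show ?thesis using a by simp
qed
lemma L_d: "0 < a \<Longrightarrow> 0 < b \<Longrightarrow> (a + b) * (a / b) / (1 + a / b) = (a::real)"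
proof -
  assume p: "0 < a" "0 < b"
  have q: "0 < 1 + a / b" using p by (simp add: add_pos_pos)
  have "(a + b) * (a / b) = a * (1 + a / b)" using p by (simp add: field_simps)
  then show ?thesis using q by simp
qed
lemma L_e: "0 < a \<Longrightarrow> 0 < b \<Longrightarrow> (a + b) / (1 + a / b) = (b::real)"
proof -
  assume p: "0 < a" "0 < b"
  have q: "0 < 1 + a / b" using p by (simp add: add_pos_pos)
  have "a + b = b * (1 + a / b)" using p by (simp add: field_simps)
  then show ?thesis using q by simp
qed

fun wfe :: "nat \<Rightarrow> eqn \<Rightarrow> bool" where
  "wfe M (c, L, B) = ((\<forall>(w,i)\<in>set L. i < 2 * M) \<and> (\<forall>(w,i,j)\<in>set B. i < M \<and> M \<le> j \<and> j < 2 * M))"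

lemma ceqs_wf: "(\<And>i. i \<in> vs e \<Longrightarrow> i < M) \<Longrightarrow> p + sz e \<le> M \<Longrightarrow> eq \<in> set (ceqs a b M e p) \<Longrightarrow> wfe M eq"
proof (induction e arbitrary: p)
  case (Ad e1 e2)
  have h1: "\<And>i. i \<in> vs e1 \<Longrightarrow> i < M" "\<And>i. i \<in> vs e2 \<Longrightarrow> i < M" using Ad.prems(1) by auto
  show ?case using sz_pos[of e1] sz_pos[of e2] Ad.prems(2,3) Ad.IH(1)[OF h1(1), of "Suc p"] Ad.IH(2)[OF h1(2), of "Suc (p + sz e1)"] by auto
next
  case (Mu e1 e2)
  have h1: "\<And>i. i \<in> vs e1 \<Longrightarrow> i < M" "\<And>i. i \<in> vs e2 \<Longrightarrow> i < M" using Mu.prems(1) by auto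
  show ?case using sz_pos[of e1] sz_pos[of e2] Mu.prems(2,3) Mu.IH(1)[OF h1(1), of "Suc p"] Mu.IH(2)[OF h1(2), of "Suc (p + sz e1)"] by auto
qed auto

lemma poly_fn_eqv: "poly_fn (\<lambda>z. eqv e z)"
proof -
  obtain c L B where e: "e = (c, L, B)" by (cases e)
  have 1: "poly_fn (\<lambda>z. \<Sum>(w,i)\<leftarrow>L. w * z i)"
    by (rule poly_fn_sum_list) (auto simp: case_prod_beta intro!: poly_fn.mult poly_fn.const poly_fn.coord)
  have 2: "poly_fn (\<lambda>z. \<Sum>(w,i,j)\<leftarrow>B. w * z i * z j)"
    by (rule poly_fn_sum_list) (auto simp: case_prod_beta intro!: poly_fn.mult poly_fn.const poly_fn.coord)
  show ?thesis unfolding e eqv.simps using 1 2 by (intro poly_fn.add poly_fn.const)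
qed

context
  fixes n :: nat and Qe :: pexp
begin

definition "EE = tr n Qe"
definition "Mc = 2 * n + sz EE"
definition "eps = 1 / (real Mc + 1)"
definition "Kc = bnd EE"
definition "ac = eps / (2 * Kc)"
definition "bc = eps / 2"

definition "eqs = map (\<lambda>j. (-eps, [(1,j),(1,n+j)], [])) [0..<n] @ ceqs ac bc Mc EE (2 * n)
   @ [(-bc, [(1, 2 * n)], [])] @ map (\<lambda>q. (0, [(1, Mc + q), (-1, q)], [])) [0..<Mc]"

definition "Core = {z \<in> Rk (2 * Mc). (\<forall>i<2 * Mc. 0 < z i) \<and> (\<forall>e\<in>set eqs. eqv e z = 0)}"

definition "Vq = {x \<in> Rk n. ev Qe x = 0}"

definition "base x = (\<lambda>i. if i < n then eps * Gf (x i) / (1 + Gf (x i))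
   else if i < 2 * n then eps / (1 + Gf (x (i - n))) else 0)"
definition "XX x = fillc ac bc EE (2 * n) (base x)"
definition "fC x = (\<lambda>i. if i < Mc then XX x i else if i < 2 * Mc then XX x (i - Mc) else 0)"
definition "gC z = (\<lambda>j. if j < n then z j / z (n + j) - z (n + j) / z j else (0::real))"

lemma Mc_gt: "2 * n < Mc" unfolding Mc_def using sz_pos by simp
lemma eps_pos: "0 < eps" unfolding eps_def by simp
lemma eps_le1: "eps \<le> 1" unfolding eps_def by simp
lemma Kc_ge: "1 \<le> Kc" unfolding Kc_def by (rule bnd_ge1)
lemma ac_nz: "ac \<noteq> 0" unfolding ac_def using eps_pos Kc_ge by simp
lemma vs_EE: "i \<in> vs EE \<Longrightarrow> i < 2 * n" unfolding EE_def using vs_tr by blast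

lemma eqs_wf: "e \<in> set eqs \<Longrightarrow> wfe Mc e"
proof -
  assume e: "e \<in> set eqs"
  have "\<And>i. i \<in> vs EE \<Longrightarrow> i < Mc" using vs_EE Mc_gt by fastforce
  moreover have "2 * n + sz EE \<le> Mc" unfolding Mc_def by simp
  ultimately have C: "\<And>eq. eq \<in> set (ceqs ac bc Mc EE (2 * n)) \<Longrightarrow> wfe Mc eq" by (rule ceqs_wf)
  have "e \<in> set (map (\<lambda>j. (-eps, [(1,j),(1,n+j)], [])) [0..<n]) \<or> e \<in> set (ceqs ac bc Mc EE (2 * n))
     \<or> e = (-bc, [(1, 2 * n)], []) \<or> e \<in> set (map (\<lambda>q. (0, [(1, Mc + q), (-1, q)], [])) [0..<Mc])"
    using e unfolding eqs_def by auto
  then show ?thesis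
  proof (elim disjE)
    assume "e \<in> set (ceqs ac bc Mc EE (2 * n))" then show ?thesis by (rule C)
  qed (use Mc_gt in auto)
qed

lemma Core_facts:
  assumes z: "z \<in> Core"
  shows "\<And>j. j < n \<Longrightarrow> z j + z (n + j) = eps"
    and "good ac bc EE (2 * n) z"
    and "z (2 * n) = bc"
    and "\<And>q. q < Mc \<Longrightarrow> z (Mc + q) = z q"
    and "\<And>i. i < 2 * Mc \<Longrightarrow> 0 < z i"
    and "z \<in> Rk (2 * Mc)"
proof -
  have all: "\<forall>e\<in>set eqs. eqv e z = 0" and pos: "\<forall>i<2 * Mc. 0 < z i" and zR: "z \<in> Rk (2 * Mc)"
    using z unfolding Core_def by auto
  show "\<And>i. i < 2 * Mc \<Longrightarrow> 0 < z i" "z \<in> Rk (2 * Mc)" using pos zR by auto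
  show "\<And>j. j < n \<Longrightarrow> z j + z (n + j) = eps"
  proof -
    fix j assume "j < n"
    then have "(-eps, [(1,j),(1,n+j)], []) \<in> set eqs" unfolding eqs_def by auto
    then show "z j + z (n + j) = eps" using all by fastforce
  qed
  show cp: "\<And>q. q < Mc \<Longrightarrow> z (Mc + q) = z q"
  proof -
    fix q assume "q < Mc"
    then have "(0, [(1, Mc + q), (-1, q)], []) \<in> set eqs" unfolding eqs_def by auto
    then show "z (Mc + q) = z q" using all by fastforce
  qed
  have "(-bc, [(1, 2 * n)], []) \<in> set eqs" unfolding eqs_def by auto
  then show "z (2 * n) = bc" using all by fastforce
  have "\<forall>eq\<in>set (ceqs ac bc Mc EE (2 * n)). eqv eq z = 0" using all unfolding eqs_def by auto
  moreover have "\<And>q. 2 * n \<le> q \<Longrightarrow> q < 2 * n + sz EE \<Longrightarrow> z (Mc + q) = z q"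
    using cp unfolding Mc_def by auto
  ultimately show "good ac bc EE (2 * n) z" using circ[OF ac_nz] by blast
qed

lemma Core_lt:
  assumes z: "z \<in> Core" and i: "i < 2 * Mc"
  shows "z i < eps"
proof -
  note F = Core_facts[OF z]
  have lt1: "\<And>i. i < 2 * n \<Longrightarrow> z i < eps"
  proof -
    fix i assume i: "i < 2 * n"
    show "z i < eps"
    proof (cases "i < n")
      case True
      then show ?thesis using F(1)[OF True] F(5)[of "n + i"] Mc_gt by auto
    next
      case False
      then obtain j where j: "i = n + j" "j < n" using i by (metis add_diff_inverse_nat add_less_cancel_left mult_2)
      then show ?thesis using F(1)[OF j(2)] F(5)[of j] Mc_gt by auto
    qed
  qed
  have lt2: "\<And>q. q < Mc \<Longrightarrow> z q < eps"
  proof -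
    fix q assume q: "q < Mc"
    show "z q < eps"
    proof (cases "q < 2 * n")
      case True then show ?thesis using lt1 by simp
    next
      case False
      have vb: "\<And>i. i \<in> vs EE \<Longrightarrow> \<bar>z i\<bar> < 1"
      proof -
        fix i assume "i \<in> vs EE"
        then have "i < 2 * n" by (rule vs_EE)
        then show "\<bar>z i\<bar> < 1" using lt1[of i] F(5)[of i] Mc_gt eps_le1 by auto
      qed
      have "0 < z q \<and> z q < eps"
        using good_bounds[where K=Kc and \<epsilon>=eps, OF F(2) vb _ ac_def bc_def eps_pos] False q
        unfolding Kc_def Mc_def by auto
      then show ?thesis by simp
    qed
  qed
  show ?thesis
  proof (cases "i < Mc")
    case True then show ?thesis using lt2 by simp
  next
    case False
    then obtain q where "i = Mc + q" "q < Mc" using i by (metis add_diff_inverse_nat add_less_cancel_left mult_2)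
    then show ?thesis using lt2 F(4) by simp
  qed
qed

lemma semialg_Core: "semialg (2 * Mc) Core"
  unfolding Core_def
  by (intro sa_conj sa_all_less sa_all_list sa_gt sa_eq poly_fn.coord poly_fn_eqv)

lemma semialg_Vq: "semialg n Vq"
  unfolding Vq_def by (intro sa_eq poly_fn_ev)

lemma base_pos: "i < 2 * n \<Longrightarrow> 0 < base x i \<and> base x i < eps"
proof -
  assume i: "i < 2 * n"
  have G: "0 < Gf v" for v by (rule Gf_pos)
  have G1: "0 < 1 + Gf v" for v using G[of v] by linarith
  have A: "0 < eps * Gf v / (1 + Gf v)" for v using G[of v] G1[of v] eps_pos by simp
  have B: "0 < eps / (1 + Gf v)" for v using G1[of v] eps_pos by simp
  have C: "eps * Gf v / (1 + Gf v) + eps / (1 + Gf v) = eps" for v by (rule L_c[OF G])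
  show ?thesis
  proof (cases "i < n")
    case True
    then show ?thesis unfolding base_def using A[of "x i"] B[of "x i"] C[of "x i"] by simp
  next
    case False
    then show ?thesis unfolding base_def using A[of "x (i - n)"] B[of "x (i - n)"] C[of "x (i - n)"] i by simp
  qed
qed

lemma base_ratio:
  assumes j: "j < n"
  shows "base x j / base x (n + j) = Gf (x j)" "base x (n + j) / base x j = 1 / Gf (x j)"
    "base x j + base x (n + j) = eps"
proof -
  have bj: "base x j = eps * Gf (x j) / (1 + Gf (x j))" "base x (n + j) = eps / (1 + Gf (x j))"
    unfolding base_def using j by auto
  show "base x j / base x (n + j) = Gf (x j)" unfolding bj by (rule L_a[OF Gf_pos eps_pos])
  show "base x (n + j) / base x j = 1 / Gf (x j)" unfolding bj by (rule L_b[OF Gf_pos eps_pos])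
  show "base x j + base x (n + j) = eps" unfolding bj by (rule L_c[OF Gf_pos])
qed

lemma XX_low: "i < 2 * n \<Longrightarrow> XX x i = base x i"
  unfolding XX_def by (rule fill_out) simp

lemma XX_good: "good ac bc EE (2 * n) (XX x)"
  unfolding XX_def by (rule fill_good) (rule vs_EE)

lemma fC_good: "good ac bc EE (2 * n) (fC x)"
proof -
  have "good ac bc EE (2 * n) (fC x) = good ac bc EE (2 * n) (XX x)"
  proof (rule good_cong)
    fix q assume "q \<in> vs EE \<or> (2 * n \<le> q \<and> q < 2 * n + sz EE)"
    then have "q < Mc" using vs_EE Mc_gt unfolding Mc_def by fastforce
    then show "fC x q = XX x q" unfolding fC_def by simp
  qed
  then show ?thesis using XX_good by simp
qed

lemma ev_EE_fC:
  assumes x: "x \<in> Rk n"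
  shows "ev EE (fC x) = Wf n (base x) ^ deg n Qe * ev Qe x"
proof -
  have "ev EE (fC x) = ev EE (base x)"
  proof (rule ev_cong)
    fix i assume "i \<in> vs EE"
    then have i: "i < 2 * n" by (rule vs_EE)
    then show "fC x i = base x i" unfolding fC_def using XX_low Mc_gt by simp
  qed
  also have "\<dots> = Wf n (base x) ^ deg n Qe * ev Qe x" unfolding EE_def
  proof (rule ev_tr[OF _ x])
    fix j assume j: "j < n"
    show "0 < base x j \<and> 0 < base x (n + j)" using base_pos[of j x] base_pos[of "n + j" x] j by auto
    have "base x j / base x (n + j) = Gf (x j)" "base x (n + j) / base x j = 1 / Gf (x j)"
      using base_ratio[OF j] by auto
    then show "x j = base x j / base x (n + j) - base x (n + j) / base x j" using Gf_inv[of "x j"] by simp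
  qed
  finally show ?thesis .
qed

lemma fC_Core: "x \<in> Vq \<Longrightarrow> fC x \<in> Core"
proof -
  assume xV: "x \<in> Vq"
  then have x: "x \<in> Rk n" and q0: "ev Qe x = 0" unfolding Vq_def by auto
  have low: "\<And>i. i < 2 * n \<Longrightarrow> fC x i = base x i" unfolding fC_def using XX_low Mc_gt by simp
  have vb: "\<And>i. i \<in> vs EE \<Longrightarrow> \<bar>fC x i\<bar> < 1"
  proof -
    fix i assume "i \<in> vs EE"
    then have "i < 2 * n" by (rule vs_EE)
    then show "\<bar>fC x i\<bar> < 1" using low base_pos[of i x] eps_le1 by auto
  qed
  have nodes: "\<And>q. 2 * n \<le> q \<Longrightarrow> q < Mc \<Longrightarrow> 0 < fC x q"
    using good_bounds[where K=Kc and \<epsilon>=eps, OF fC_good vb _ ac_def bc_def eps_pos]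
    unfolding Kc_def Mc_def by auto
  have posM: "\<And>q. q < Mc \<Longrightarrow> 0 < fC x q"
    using nodes low base_pos by (metis not_le)
  have cp: "\<And>q. q < Mc \<Longrightarrow> fC x (Mc + q) = fC x q" unfolding fC_def by simp
  have pos: "\<forall>i<2 * Mc. 0 < fC x i"
  proof (intro allI impI)
    fix i assume i: "i < 2 * Mc"
    show "0 < fC x i"
    proof (cases "i < Mc")
      case True then show ?thesis using posM by simp
    next
      case False
      then obtain q where "i = Mc + q" "q < Mc" using i by (metis add_diff_inverse_nat add_less_cancel_left mult_2)
      then show ?thesis using posM cp by simp
    qed
  qed
  have R: "fC x \<in> Rk (2 * Mc)" unfolding fC_def Rk_def by auto
  have slack: "\<And>j. j < n \<Longrightarrow> fC x j + fC x (n + j) = eps"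
  proof -
    fix j assume j: "j < n"
    have "base x j + base x (n + j) = eps" by (rule base_ratio(3)[OF j])
    then show "fC x j + fC x (n + j) = eps" using low j by simp
  qed
  have circ_ok: "\<forall>eq\<in>set (ceqs ac bc Mc EE (2 * n)). eqv eq (fC x) = 0"
    using circ[OF ac_nz, of "2 * n" EE "fC x" Mc] cp fC_good unfolding Mc_def by auto
  have root: "fC x (2 * n) = bc"
    using good_root[OF fC_good] ev_EE_fC[OF x] q0 by simp
  have "\<forall>e\<in>set eqs. eqv e (fC x) = 0"
    unfolding eqs_def using slack circ_ok root cp by auto
  then show "fC x \<in> Core" unfolding Core_def using pos R by simp
qed

lemma gC_Vq: "z \<in> Core \<Longrightarrow> gC z \<in> Vq"
proof -
  assume z: "z \<in> Core"
  note F = Core_facts[OF z]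
  have R: "gC z \<in> Rk n" unfolding gC_def Rk_def by auto
  have pz: "\<And>j. j < n \<Longrightarrow> 0 < z j \<and> 0 < z (n + j)" using F(5) Mc_gt by auto
  have "ev EE z = Wf n z ^ deg n Qe * ev Qe (gC z)" unfolding EE_def
  proof (rule ev_tr[where n=n and z=z and x="gC z" and e=Qe, OF pz R])
    fix j assume "j < n" then show "gC z j = z j / z (n + j) - z (n + j) / z j" unfolding gC_def by simp
  qed
  moreover have "ev EE z = 0" using good_root[OF F(2)] F(3) ac_nz by simp
  moreover have "0 < Wf n z" by (rule Wf_pos[where n=n and z=z, OF pz])
  ultimately have "ev Qe (gC z) = 0" by simp
  then show "gC z \<in> Vq" unfolding Vq_def using R by simp
qed

lemma gC_fC: "x \<in> Rk n \<Longrightarrow> gC (fC x) = x"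
proof
  fix j assume x: "x \<in> Rk n"
  show "gC (fC x) j = x j"
  proof (cases "j < n")
    case True
    have low: "\<And>i. i < 2 * n \<Longrightarrow> fC x i = base x i" unfolding fC_def using XX_low Mc_gt by simp
    have "base x j / base x (n + j) = Gf (x j)" "base x (n + j) / base x j = 1 / Gf (x j)"
      using base_ratio[OF True] by auto
    then show ?thesis unfolding gC_def using True low Gf_inv[of "x j"] by simp
  next
    case False then show ?thesis using x unfolding gC_def Rk_def by simp
  qed
qed

lemma fC_gC: "z \<in> Core \<Longrightarrow> fC (gC z) = z"
proof -
  assume z: "z \<in> Core"
  note F = Core_facts[OF z]
  let ?x = "gC z"
  have bz: "\<And>i. i < 2 * n \<Longrightarrow> base ?x i = z i"
  proof -
    fix i assume i: "i < 2 * n"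
    show "base ?x i = z i"
    proof (cases "i < n")
      case True
      have p: "0 < z i" "0 < z (n + i)" using F(5) True Mc_gt by auto
      let ?u = "z i / z (n + i)"
      have "gC z i = ?u - 1 / ?u" unfolding gC_def using True by simp
      then have G: "Gf (gC z i) = ?u" using Gf_inv2[of ?u] p by simp
      have s: "z i + z (n + i) = eps" using F(1) True by simp
      have "eps * ?u / (1 + ?u) = z i" unfolding s[symmetric] by (rule L_d[OF p])
      then show ?thesis unfolding base_def using True G by simp
    next
      case False
      then obtain j where j: "i = n + j" "j < n" using i by (metis add_diff_inverse_nat add_less_cancel_left mult_2)
      have p: "0 < z j" "0 < z (n + j)" using F(5) j Mc_gt by auto
      let ?u = "z j / z (n + j)"
      have "gC z j = ?u - 1 / ?u" unfolding gC_def using j by simp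
      then have G: "Gf (gC z j) = ?u" using Gf_inv2[of ?u] p by simp
      have s: "z j + z (n + j) = eps" using F(1) j by simp
      have "eps / (1 + ?u) = z (n + j)" unfolding s[symmetric] by (rule L_e[OF p])
      then show ?thesis unfolding base_def using False i j G by simp
    qed
  qed
  have XXz: "\<And>q. q < Mc \<Longrightarrow> XX ?x q = z q"
  proof -
    fix q assume q: "q < Mc"
    show "XX ?x q = z q"
    proof (cases "q < 2 * n")
      case True then show ?thesis using XX_low bz by simp
    next
      case False
      have "\<And>i. i \<in> vs EE \<Longrightarrow> XX ?x i = z i" using vs_EE XX_low bz by simp
      then show ?thesis using good_uniq[OF XX_good F(2)] False q unfolding Mc_def by simp
    qed
  qed
  show "fC ?x = z"
  proof
    fix i
    show "fC ?x i = z i"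
    proof (cases "i < Mc")
      case True then show ?thesis unfolding fC_def using XXz by simp
    next
      case False
      show ?thesis
      proof (cases "i < 2 * Mc")
        case True
        then obtain q where q: "i = Mc + q" "q < Mc" using False by (metis add_diff_inverse_nat add_less_cancel_left mult_2)
        then show ?thesis unfolding fC_def using XXz F(4) by simp
      next
        case False2: False
        then show ?thesis unfolding fC_def using F(6) False unfolding Rk_def by simp
      qed
    qed
  qed
qed

lemma cont_base: "continuous_on S base"
proof (rule continuous_on_coordinatewise_then_product)
  fix i
  have nz: "1 + Gf v \<noteq> 0" for v using Gf_pos[of v] by linarith
  show "continuous_on S (\<lambda>x. base x i)"
  proof (cases "i < n")
    case True
    have "continuous_on S (\<lambda>x. eps * Gf (x i) / (1 + Gf (x i)))"
      using nz by (intro continuous_intros Gf_cont cont_coord) auto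
    then show ?thesis unfolding base_def using True by simp
  next
    case False
    have "continuous_on S (\<lambda>x. eps / (1 + Gf (x (i - n))))"
      using nz by (intro continuous_intros Gf_cont cont_coord) auto
    then show ?thesis unfolding base_def using False by (cases "i < 2 * n") (simp_all add: continuous_on_const)
  qed
qed

lemma cont_fC: "continuous_on S fC"
proof (rule continuous_on_coordinatewise_then_product)
  fix i
  have cX: "continuous_on S XX" unfolding XX_def by (rule cont_fill[OF cont_base])
  show "continuous_on S (\<lambda>x. fC x i)"
    unfolding fC_def
    by (cases "i < Mc"; cases "i < 2 * Mc")
      (simp_all add: continuous_on_const continuous_on_product_then_coordinatewise[OF cX])
qed

lemma cont_gC: "continuous_on Core gC"
proof (rule continuous_on_coordinatewise_then_product)
  fix j
  show "continuous_on Core (\<lambda>z. gC z j)"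
  proof (cases "j < n")
    case True
    have "\<forall>z\<in>Core. 0 < z j \<and> 0 < z (n + j)" using Core_facts(5) True Mc_gt by auto
    then have "continuous_on Core (\<lambda>z. z j / z (n + j) - z (n + j) / z j)"
      by (intro continuous_intros cont_coord) auto
    then show ?thesis unfolding gC_def using True by simp
  next
    case False then show ?thesis unfolding gC_def by (simp add: continuous_on_const)
  qed
qed

lemma core_iso: "stably_iso (2 * Mc, Core) (n, Vq)"
proof (rule stably_iso.sym, rule iso_intro)
  show sS: "semialg n Vq" by (rule semialg_Vq)
  show sT: "semialg (2 * Mc) Core" by (rule semialg_Core)
  show "continuous_on Vq fC" by (rule cont_fC)
  show "continuous_on Core gC" by (rule cont_gC)
  show fi: "fC ` Vq \<subseteq> Core" using fC_Core by auto
  show gi: "gC ` Core \<subseteq> Vq" using gC_Vq by auto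
  show gf: "\<And>x. x \<in> Vq \<Longrightarrow> gC (fC x) = x" using gC_fC unfolding Vq_def by auto
  show fg: "\<And>y. y \<in> Core \<Longrightarrow> fC (gC y) = y" using fC_gC by auto
  define P where "P x z \<longleftrightarrow> z \<in> Core \<and> (\<forall>j<n. x j * (z j * z (n + j)) = z j ^ 2 - z (n + j) ^ 2)" for x z
  have Pc: "P x z \<longleftrightarrow> (z \<in> Core \<and> x = gC z)" if x: "x \<in> Rk n" and zR: "z \<in> Rk (2 * Mc)" for x z
  proof
    assume H: "P x z"
    then have zC: "z \<in> Core" unfolding P_def by simp
    have "x = gC z"
    proof
      fix j show "x j = gC z j"
      proof (cases "j < n")
        case True
        have p: "0 < z j" "0 < z (n + j)" using Core_facts(5)[OF zC] True Mc_gt by auto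
        have "x j * (z j * z (n + j)) = z j ^ 2 - z (n + j) ^ 2" using H True unfolding P_def by simp
        then have "x j = z j / z (n + j) - z (n + j) / z j" using p by (simp add: field_simps power2_eq_square)
        then show ?thesis unfolding gC_def using True by simp
      next
        case False then show ?thesis using x unfolding gC_def Rk_def by simp
      qed
    qed
    then show "z \<in> Core \<and> x = gC z" using zC by simp
  next
    assume H: "z \<in> Core \<and> x = gC z"
    have "x j * (z j * z (n + j)) = z j ^ 2 - z (n + j) ^ 2" if j: "j < n" for j
    proof -
      have p: "0 < z j" "0 < z (n + j)" using Core_facts(5) H j Mc_gt by auto
      have "x j = z j / z (n + j) - z (n + j) / z j" using H j unfolding gC_def by simp
      then show ?thesis using p by (simp add: field_simps power2_eq_square)
    qed
    then show "P x z" using H unfolding P_def by simp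
  qed
  have "{join n x (fC x) |x. x \<in> Vq} = {w \<in> Rk (n + 2 * Mc). P (rs n w) (sh n w)}"
  proof (rule graph_char[where P=P])
    show "Vq \<subseteq> Rk n" "Core \<subseteq> Rk (2 * Mc)" using semialg_sub[OF sS] semialg_sub[OF sT] .
    show "fC ` Vq \<subseteq> Core" "gC ` Core \<subseteq> Vq" by fact+
    show "\<And>y. y \<in> Core \<Longrightarrow> fC (gC y) = y" by fact
    show "\<And>x. x \<in> Vq \<Longrightarrow> gC (fC x) = x" by fact
    show "\<And>x z. x \<in> Rk n \<Longrightarrow> z \<in> Rk (2 * Mc) \<Longrightarrow> P x z \<longleftrightarrow> (z \<in> Core \<and> x = gC z)"
      by (rule Pc)
  qed
  also have "semialg (n + 2 * Mc) \<dots>"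
  proof -
    have e: "{w \<in> Rk (n + 2 * Mc). P (rs n w) (sh n w)} =
       {w \<in> Rk (n + 2 * Mc). sh n w \<in> Core \<and> (\<forall>j<n. rs n w j * (sh n w j * sh n w (n + j)) = sh n w j ^ 2 - sh n w (n + j) ^ 2)}"
      unfolding P_def by simp
    show ?thesis unfolding e
      by (intro sa_conj semialg_shcyl sT sa_all_less sa_eq2 pf_intros)
  qed
  finally show "semialg (n + 2 * Mc) {join n x (fC x) |x. x \<in> Vq}" .
qed

end


lemma eqv_cong: "wfe M e \<Longrightarrow> (\<And>i. i < 2 * M \<Longrightarrow> z i = z' i) \<Longrightarrow> eqv e z = eqv e z'"
proof -
  assume w: "wfe M e" and c: "\<And>i. i < 2 * M \<Longrightarrow> z i = z' i"
  obtain cc L B where e: "e = (cc, L, B)" by (cases e)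
  have 1: "(\<Sum>(w,i)\<leftarrow>L. w * z i) = (\<Sum>(w,i)\<leftarrow>L. w * z' i)"
    using w c unfolding e by (intro arg_cong[where f=sum_list] map_cong) auto
  have 2: "(\<Sum>(w,i,j)\<leftarrow>B. w * z i * z j) = (\<Sum>(w,i,j)\<leftarrow>B. w * z' i * z' j)"
    using w c unfolding e by (intro arg_cong[where f=sum_list] map_cong) auto
  show ?thesis unfolding e eqv.simps 1 2 ..
qed

lemma sum_list_concat_map: "sum_list (map g (concat xss)) = sum_list (map (\<lambda>xs. sum_list (map g xs)) xss)"
  by (induction xss) auto

lemma sum_list_upt_conv: "sum_list (map f [0..<r]) = (\<Sum>k<r. f k)"
  by (metis atLeast0LessThan atLeast_upt distinct_upt sum.distinct_set_conv_list)

definition Rm :: "nat \<Rightarrow> nat set \<Rightarrow> nat \<Rightarrow> nat \<Rightarrow> real" where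
  "Rm i A = (\<lambda>p. if p = i \<or> p \<in> A then ind 1 else (\<lambda>_. 1))"

fun oterms :: "nat \<Rightarrow> eqn \<Rightarrow> (real \<times> (nat \<Rightarrow> nat \<Rightarrow> real)) list" where
  "oterms i (c, L, B) = (c, Rm i {}) # map (\<lambda>(w,l). (w, Rm i {l})) L @ map (\<lambda>(w,l,l'). (w, Rm i {l,l'})) B"

lemma strat1: "strat_of_coords (\<lambda>_. 1) y i 0 = 1 - y i" "strat_of_coords (\<lambda>_. 1) y i 1 = y i"
  "strat_of_coords (\<lambda>_. Suc 0) y i 0 = 1 - y i" "strat_of_coords (\<lambda>_. Suc 0) y i (Suc 0) = y i"
  unfolding strat_of_coords_def offset_def by auto

lemma dev_bin:
  assumes i: "i < N" and j: "j \<le> 1" and A: "A \<subseteq> {..<N} - {i}"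
  shows "(\<Prod>l\<in>{..<N}-{i}. \<Sum>j'\<le>1. Rm i A l j' * strat_of_coords (\<lambda>_. 1) y l j') = (\<Prod>l\<in>A. y l)"
proof -
  have "(\<Prod>l\<in>{..<N}-{i}. \<Sum>j'\<le>1. Rm i A l j' * strat_of_coords (\<lambda>_. 1) y l j')
      = (\<Prod>l\<in>{..<N}-{i}. if l \<in> A then y l else 1)"
  proof (intro prod.cong refl)
    fix l assume l: "l \<in> {..<N}-{i}"
    have "{..1::nat} = {0, 1}" by auto
    then show "(\<Sum>j'\<le>1. Rm i A l j' * strat_of_coords (\<lambda>_. 1) y l j') = (if l \<in> A then y l else 1)"
      using l by (simp add: Rm_def ind_def strat1)
  qed
  also have "\<dots> = (\<Prod>l\<in>A. y l)" by (rule prod_if_in[OF _ A]) simp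
  finally show ?thesis .
qed

lemma dev_oterms:
  assumes i: "i < N" and j: "j \<le> 1" and w: "wfe M e" and iM: "2 * M \<le> i" and N: "2 * M \<le> N"
    and ts: "ts i = oterms i e"
  shows "dev_payoff N (\<lambda>_. 1) (upay N ts) (strat_of_coords (\<lambda>_. 1) y) i j = ind 1 j * eqv e y"
proof -
  obtain c L B where e: "e = (c, L, B)" by (cases e)
  let ?P = "\<lambda>A. (\<Prod>l\<in>{..<N}-{i}. \<Sum>j'\<le>1. Rm i A l j' * strat_of_coords (\<lambda>_. 1) y l j')"
  have P0: "?P {} = 1" using dev_bin[OF i j, of "{}"] by simp
  have P1: "?P {l} = y l" if "(w', l) \<in> set L" for w' l
  proof -
    have "l < 2 * M" using w that unfolding e by auto
    then have "{l} \<subseteq> {..<N}-{i}" using iM N by auto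
    then show ?thesis using dev_bin[OF i j] by simp
  qed
  have P2: "?P {l, l'} = y l * y l'" if "(w', l, l') \<in> set B" for w' l l'
  proof -
    have "l < M" "M \<le> l'" "l' < 2 * M" using w that unfolding e by auto
    then have "{l, l'} \<subseteq> {..<N}-{i}" "l \<noteq> l'" using iM N by auto
    then show ?thesis using dev_bin[OF i j] by simp
  qed
  have "dev_payoff N (\<lambda>_. 1) (upay N ts) (strat_of_coords (\<lambda>_. 1) y) i j
      = (\<Sum>(w,R)\<leftarrow>oterms i e. w * R i j * (\<Prod>l\<in>{..<N}-{i}. \<Sum>j'\<le>1. R l j' * strat_of_coords (\<lambda>_. 1) y l j'))"
    using dev_upay[OF i, of j "\<lambda>_. 1"] j ts by simp
  also have "\<dots> = ind 1 j * c + (\<Sum>(w,l)\<leftarrow>L. ind 1 j * (w * y l)) + (\<Sum>(w,l,l')\<leftarrow>B. ind 1 j * (w * y l * y l'))"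
  proof -
    have RI: "Rm i A i j = ind 1 j" for A unfolding Rm_def by simp
    have a: "(\<Sum>(w,R)\<leftarrow>map (\<lambda>(w,l). (w, Rm i {l})) L. w * R i j * (\<Prod>l\<in>{..<N}-{i}. \<Sum>j'\<le>1. R l j' * strat_of_coords (\<lambda>_. 1) y l j'))
        = (\<Sum>(w,l)\<leftarrow>L. ind 1 j * (w * y l))"
      unfolding map_map
      apply (intro arg_cong[where f=sum_list] map_cong refl)
      subgoal for t by (cases t) (simp only: comp_def prod.case RI P1, simp)
      done
    have b: "(\<Sum>(w,R)\<leftarrow>map (\<lambda>(w,l,l'). (w, Rm i {l,l'})) B. w * R i j * (\<Prod>l\<in>{..<N}-{i}. \<Sum>j'\<le>1. R l j' * strat_of_coords (\<lambda>_. 1) y l j'))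
        = (\<Sum>(w,l,l')\<leftarrow>B. ind 1 j * (w * y l * y l'))"
      unfolding map_map
      apply (intro arg_cong[where f=sum_list] map_cong refl)
      subgoal for t by (cases t) (simp only: comp_def prod.case RI P2, simp)
      done
    show ?thesis unfolding e oterms.simps list.map sum_list.Cons map_append sum_list_append a b
      using P0 RI by simp
  qed
  also have "\<dots> = ind 1 j * eqv e y"
  proof -
    have "(\<Sum>(w,l)\<leftarrow>L. ind 1 j * (w * y l)) = ind 1 j * (\<Sum>(w,l)\<leftarrow>L. w * y l)"
      by (induction L) (auto simp: algebra_simps)
    moreover have "(\<Sum>(w,l,l')\<leftarrow>B. ind 1 j * (w * y l * y l')) = ind 1 j * (\<Sum>(w,l,l')\<leftarrow>B. w * y l * y l')"
      by (induction B) (auto simp: algebra_simps)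
    ultimately show ?thesis unfolding e eqv.simps by (simp only: distrib_left)
  qed
  finally show ?thesis .
qed


lemma all_le1: "(\<forall>j\<le>(1::nat). P j) \<longleftrightarrow> P 0 \<and> P 1"
  by (auto simp: le_Suc_eq)

lemma split_lt: "(\<forall>i<m + r. P (i::nat)) \<longleftrightarrow> (\<forall>i<m. P i) \<and> (\<forall>k<r. P (m + k))"
  by (metis add_diff_inverse_nat add_less_cancel_left less_diff_conv2 not_le trans_less_add1 nat_le_linear)

lemma rs_Core:
  assumes y: "y \<in> Rk (2 * Mc n Qe + r)"
  shows "rs (2 * Mc n Qe) y \<in> Core n Qe \<longleftrightarrow>
     (\<forall>i<2 * Mc n Qe. 0 < y i) \<and> (\<forall>k<length (eqs n Qe). eqv (eqs n Qe ! k) y = 0)"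
proof -
  have ev: "eqv e (rs (2 * Mc n Qe) y) = eqv e y" if "e \<in> set (eqs n Qe)" for e
    using eqs_wf[OF that] by (rule eqv_cong) (simp add: rs_def)
  have "(\<forall>e\<in>set (eqs n Qe). eqv e (rs (2 * Mc n Qe) y) = 0) \<longleftrightarrow> (\<forall>e\<in>set (eqs n Qe). eqv e y = 0)"
    using ev by auto
  also have "\<dots> \<longleftrightarrow> (\<forall>k<length (eqs n Qe). eqv (eqs n Qe ! k) y = 0)" by (rule all_set_conv_all_nth)
  finally show ?thesis unfolding Core_def using rs_Rk by (auto simp: rs_def)
qed

definition "N2 n Qe = 2 * Mc n Qe + length (eqs n Qe)"
definition "ts2 n Qe i = (if 2 * Mc n Qe \<le> i \<and> i < N2 n Qe then oterms i (eqs n Qe ! (i - 2 * Mc n Qe)) else [])"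

lemma allN: "(\<forall>i<N2 n Qe. P i) \<longleftrightarrow> (\<forall>i<2 * Mc n Qe + length (eqs n Qe). P i)"
  by (simp add: N2_def)

lemma tmne2: "tmne (N2 n Qe) (\<lambda>_. 1) (upay (N2 n Qe) (ts2 n Qe)) = TB (2 * Mc n Qe) (Core n Qe) (length (eqs n Qe))"
proof -
  let ?m = "2 * Mc n Qe" and ?r = "length (eqs n Qe)" and ?N = "N2 n Qe"
  let ?u = "upay (N2 n Qe) (ts2 n Qe)"
  have N: "?N = ?m + ?r" unfolding N2_def by simp
  have A: "(\<forall>i<?N. \<forall>j\<le>1. 0 < strat_of_coords (\<lambda>_. 1) y i j \<and> strat_of_coords (\<lambda>_. 1) y i j < 1)
      \<longleftrightarrow> (\<forall>i<?N. 0 < y i \<and> y i < 1)" for y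
    unfolding all_le1 strat1 by auto
  have dev0: "dev_payoff ?N (\<lambda>_. 1) ?u (strat_of_coords (\<lambda>_. 1) y) i j = 0" if "i < ?m" "j \<le> 1" for y i j
  proof -
    have "i < ?N" using that N by simp
    then show ?thesis using dev_upay[of i ?N j "\<lambda>_. 1" "ts2 n Qe"] that unfolding ts2_def by simp
  qed
  have devk: "dev_payoff ?N (\<lambda>_. 1) ?u (strat_of_coords (\<lambda>_. 1) y) (?m + k) j = ind 1 j * eqv (eqs n Qe ! k) y"
    if "k < ?r" "j \<le> 1" for y k j
  proof (rule dev_oterms[where M="Mc n Qe"])
    show "?m + k < ?N" using that N by simp
    show "j \<le> 1" by fact
    show "wfe (Mc n Qe) (eqs n Qe ! k)" using that by (intro eqs_wf) simp
    show "ts2 n Qe (?m + k) = oterms (?m + k) (eqs n Qe ! k)" unfolding ts2_def using that N by simp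
  qed (use N in auto)
  have B: "(\<forall>i<?N. \<forall>j\<in>{1..1}. dev_payoff ?N (\<lambda>_. 1) ?u (strat_of_coords (\<lambda>_. 1) y) i j
          = dev_payoff ?N (\<lambda>_. 1) ?u (strat_of_coords (\<lambda>_. 1) y) i 0)
      \<longleftrightarrow> (\<forall>k<?r. eqv (eqs n Qe ! k) y = 0)" for y
    unfolding allN split_lt using dev0 devk by (simp add: ind_def)
  show ?thesis
  proof (intro set_eqI iffI)
    fix y assume y: "y \<in> tmne ?N (\<lambda>_. 1) ?u"
    then have yR: "y \<in> Rk (?m + ?r)" unfolding tmne_def N by simp
    have a: "\<forall>i<?m + ?r. 0 < y i \<and> y i < 1" using y A unfolding tmne_def allN by simp
    have b: "\<forall>k<?r. eqv (eqs n Qe ! k) y = 0" using y B unfolding tmne_def by simp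
    show "y \<in> TB ?m (Core n Qe) ?r" unfolding TB_def using yR a b rs_Core[OF yR]
      unfolding split_lt by simp
  next
    fix y assume y: "y \<in> TB ?m (Core n Qe) ?r"
    then have yR: "y \<in> Rk (?m + ?r)" and c: "rs ?m y \<in> Core n Qe" and d: "\<forall>k<?r. 0 < y (?m + k) \<and> y (?m + k) < 1"
      unfolding TB_def by auto
    have e: "\<forall>i<?m. 0 < y i" "\<forall>k<?r. eqv (eqs n Qe ! k) y = 0" using c rs_Core[OF yR] by auto
    have f: "\<forall>i<?m. y i < 1"
    proof (intro allI impI)
      fix i assume i: "i < ?m"
      have "rs ?m y i < eps n Qe" by (rule Core_lt[OF c i])
      then show "y i < 1" using i eps_le1[of n Qe] unfolding rs_def by simp
    qed
    have "\<forall>i<?N. 0 < y i \<and> y i < 1" unfolding allN split_lt using d e f by simp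
    then show "y \<in> tmne ?N (\<lambda>_. 1) ?u" unfolding tmne_def using yR A B e(2) N by simp
  qed
qed


lemma sum_shift1: "(\<Sum>j\<in>{1..D::nat}. f (off + j - 1)) = (\<Sum>a<D. f (off + a) :: real)"
proof -
  have "{1..D} = Suc ` {..<D}" by (auto simp: image_iff) (metis Suc_pred le_simps(3) lessThan_iff less_eq_Suc_le)
  then show ?thesis by (simp add: sum.reindex)
qed

lemma strat_0: "strat_of_coords d y i 0 = 1 - (\<Sum>a<d i. y (offset d i + a))"
  unfolding strat_of_coords_def using sum_shift1[of y "offset d i" "d i"] by simp

lemma strat_j: "1 \<le> j \<Longrightarrow> strat_of_coords d y i j = y (offset d i + j - 1)"
  unfolding strat_of_coords_def by simp

lemma box_player:
  "(\<forall>j\<le>d i. 0 < strat_of_coords d y i j \<and> strat_of_coords d y i j < 1) \<longleftrightarrow>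
   (\<forall>a<d i. 0 < y (offset d i + a) \<and> y (offset d i + a) < 1) \<and>
   0 < 1 - (\<Sum>a<d i. y (offset d i + a)) \<and> 1 - (\<Sum>a<d i. y (offset d i + a)) < 1"
proof -
  have "(\<forall>j\<le>d i. P j) \<longleftrightarrow> P 0 \<and> (\<forall>a<d i. P (Suc a))" for P
    by (metis Suc_le_eq le0 not0_implies_Suc not_less_eq_eq zero_less_Suc le_simps(2) less_Suc_eq_le)
  then show ?thesis by (simp add: strat_0 strat_j, blast)
qed

context fixes n :: nat and Qe :: pexp
begin

definition "d3 = (\<lambda>i::nat. if i < 2 then Mc n Qe else length (eqs n Qe))"

definition "pl l = (if l < Mc n Qe then 0 else (1::nat))"
definition "st l = (if l < Mc n Qe then l + 1 else l - Mc n Qe + 1)"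

definition "Rc k = (\<lambda>p::nat. if p = 2 then ind (k + 1) else (\<lambda>_. 1))"
definition "Rl k l = (\<lambda>p::nat. if p = 2 then ind (k + 1) else if p = pl l then ind (st l) else (\<lambda>_. 1))"
definition "Rb k l l' = (\<lambda>p::nat. if p = 2 then ind (k + 1) else if p = 0 then ind (l + 1) else ind (l' - Mc n Qe + 1))"

fun terms3 :: "nat \<Rightarrow> eqn \<Rightarrow> (real \<times> (nat \<Rightarrow> nat \<Rightarrow> real)) list" where
  "terms3 k (c, L, B) = (c, Rc k) # map (\<lambda>(w,l). (w, Rl k l)) L @ map (\<lambda>(w,l,l'). (w, Rb k l l')) B"

definition "ts3 (i::nat) = (if i = 2 then concat (map (\<lambda>k. terms3 k (eqs n Qe ! k)) [0..<length (eqs n Qe)]) else [])"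

lemma off3: "offset d3 0 = 0" "offset d3 1 = Mc n Qe" "offset d3 2 = 2 * Mc n Qe"
  unfolding offset_def d3_def by (auto simp: numeral_2_eq_2 lessThan_Suc)

lemma sum_d3: "(\<Sum>i<3. d3 i) = 2 * Mc n Qe + length (eqs n Qe)"
  unfolding d3_def by (simp add: numeral_3_eq_3 lessThan_Suc)

lemma rem2: "{..<3::nat} - {2} = {0, 1}" by auto

lemma fac_one: "p < 2 \<Longrightarrow> (\<Sum>j'\<le>d3 p. 1 * strat_of_coords d3 y p j') = 1"
  using strat_sum[of d3 y p] by simp

lemma sum_ind: "a \<le> D \<Longrightarrow> (\<Sum>j'\<le>D. ind a j' * f j') = (f a :: real)"
proof -
  assume a: "a \<le> D"
  have "(\<Sum>j'\<le>D. ind a j' * f j') = (\<Sum>j'\<le>D. if j' = a then f j' else 0)"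
    by (intro sum.cong) (auto simp: ind_def)
  also have "\<dots> = f a" using a by (simp add: sum.delta')
  finally show ?thesis .
qed

lemma fac_ind: "p < 2 \<Longrightarrow> 1 \<le> a \<Longrightarrow> a \<le> Mc n Qe \<Longrightarrow>
   (\<Sum>j'\<le>d3 p. ind a j' * strat_of_coords d3 y p j') = y (offset d3 p + a - 1)"
proof -
  assume p: "p < 2" and a: "1 \<le> a" "a \<le> Mc n Qe"
  have "(\<Sum>j'\<le>d3 p. ind a j' * strat_of_coords d3 y p j') = strat_of_coords d3 y p a"
    using a p unfolding d3_def by (intro sum_ind) simp
  then show ?thesis using strat_j[OF a(1)] by simp
qed

lemma per_k:
  assumes w: "wfe (Mc n Qe) e" and j: "j \<le> d3 2"
  shows "(\<Sum>(w,R)\<leftarrow>terms3 k e. w * R 2 j * (\<Prod>p\<in>{..<3}-{2}. \<Sum>j'\<le>d3 p. R p j' * strat_of_coords d3 y p j'))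
     = ind (k + 1) j * eqv e y"
proof -
  obtain c L B where e: "e = (c, L, B)" by (cases e)
  let ?M = "Mc n Qe"
  let ?F = "\<lambda>R. R 2 j * (\<Prod>p\<in>{..<3}-{2}. \<Sum>j'\<le>d3 p. R p j' * strat_of_coords d3 y p j')"
  have F: "?F R = R 2 j * ((\<Sum>j'\<le>d3 0. R 0 j' * strat_of_coords d3 y 0 j') * (\<Sum>j'\<le>d3 1. R 1 j' * strat_of_coords d3 y 1 j'))" for R
    unfolding rem2 by simp
  have Fc: "?F (Rc k) = ind (k + 1) j"
    unfolding rem2 Rc_def using fac_one[of 0 y] fac_one[of 1 y] by simp
  have Fl: "?F (Rl k l) = ind (k + 1) j * y l" if "l < 2 * ?M" for l
  proof (cases "l < ?M")
    case True
    have "?F (Rl k l) = ind (k + 1) j * ((\<Sum>j'\<le>d3 0. ind (l + 1) j' * strat_of_coords d3 y 0 j') * (\<Sum>j'\<le>d3 1. 1 * strat_of_coords d3 y 1 j'))"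
      unfolding rem2 Rl_def pl_def st_def using True by simp
    also have "\<dots> = ind (k + 1) j * y l" using fac_ind[of 0 "l + 1" y] fac_one[of 1 y] True off3 by simp
    finally show ?thesis .
  next
    case False
    have "?F (Rl k l) = ind (k + 1) j * ((\<Sum>j'\<le>d3 0. 1 * strat_of_coords d3 y 0 j') * (\<Sum>j'\<le>d3 1. ind (l - ?M + 1) j' * strat_of_coords d3 y 1 j'))"
      unfolding rem2 Rl_def pl_def st_def using False by simp
    also have "\<dots> = ind (k + 1) j * y l" using fac_ind[of 1 "l - ?M + 1" y] fac_one[of 0 y] False that off3 by simp
    finally show ?thesis .
  qed
  have Fb: "?F (Rb k l l') = ind (k + 1) j * (y l * y l')" if "l < ?M" "?M \<le> l'" "l' < 2 * ?M" for l l'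
  proof -
    have "?F (Rb k l l') = ind (k + 1) j * ((\<Sum>j'\<le>d3 0. ind (l + 1) j' * strat_of_coords d3 y 0 j') * (\<Sum>j'\<le>d3 1. ind (l' - ?M + 1) j' * strat_of_coords d3 y 1 j'))"
      unfolding rem2 Rb_def by simp
    also have "\<dots> = ind (k + 1) j * (y l * y l')" using fac_ind[of 0 "l + 1" y] fac_ind[of 1 "l' - ?M + 1" y] that off3 by simp
    finally show ?thesis .
  qed
  have a: "(\<Sum>(w,R)\<leftarrow>map (\<lambda>(w,l). (w, Rl k l)) L. w * ?F R) = (\<Sum>(w,l)\<leftarrow>L. ind (k + 1) j * (w * y l))"
    unfolding map_map
    apply (intro arg_cong[where f=sum_list] map_cong refl)
    subgoal for t using w unfolding e by (cases t) (auto simp: Fl)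
    done
  have b: "(\<Sum>(w,R)\<leftarrow>map (\<lambda>(w,l,l'). (w, Rb k l l')) B. w * ?F R) = (\<Sum>(w,l,l')\<leftarrow>B. ind (k + 1) j * (w * y l * y l'))"
    unfolding map_map
    apply (intro arg_cong[where f=sum_list] map_cong refl)
    subgoal for t using w unfolding e by (cases t) (auto simp: Fb)
    done
  have "(\<Sum>(w,R)\<leftarrow>terms3 k e. w * ?F R) = c * ind (k + 1) j + (\<Sum>(w,l)\<leftarrow>L. ind (k + 1) j * (w * y l)) + (\<Sum>(w,l,l')\<leftarrow>B. ind (k + 1) j * (w * y l * y l'))"
    unfolding e terms3.simps list.map sum_list.Cons map_append sum_list_append a b using Fc by simp
  also have "\<dots> = ind (k + 1) j * eqv e y"
  proof -
    have "(\<Sum>(w,l)\<leftarrow>L. ind (k + 1) j * (w * y l)) = ind (k + 1) j * (\<Sum>(w,l)\<leftarrow>L. w * y l)"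
      by (induction L) (auto simp: algebra_simps)
    moreover have "(\<Sum>(w,l,l')\<leftarrow>B. ind (k + 1) j * (w * y l * y l')) = ind (k + 1) j * (\<Sum>(w,l,l')\<leftarrow>B. w * y l * y l')"
      by (induction B) (auto simp: algebra_simps)
    ultimately show ?thesis unfolding e eqv.simps by (simp add: distrib_left mult.commute)
  qed
  finally show ?thesis by (simp add: mult.assoc)
qed

lemma dev3_2:
  assumes j: "j \<le> d3 2"
  shows "dev_payoff 3 d3 (upay 3 ts3) (strat_of_coords d3 y) 2 j
     = (\<Sum>k<length (eqs n Qe). ind (k + 1) j * eqv (eqs n Qe ! k) y)"
proof -
  have "dev_payoff 3 d3 (upay 3 ts3) (strat_of_coords d3 y) 2 j
     = (\<Sum>(w,R)\<leftarrow>ts3 2. w * R 2 j * (\<Prod>p\<in>{..<3}-{2}. \<Sum>j'\<le>d3 p. R p j' * strat_of_coords d3 y p j'))"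
    using j by (intro dev_upay) auto
  also have "\<dots> = sum_list (map (\<lambda>k. ind (k + 1) j * eqv (eqs n Qe ! k) y) [0..<length (eqs n Qe)])"
  proof -
    have t: "ts3 2 = concat (map (\<lambda>k. terms3 k (eqs n Qe ! k)) [0..<length (eqs n Qe)])" by (simp add: ts3_def)
    show ?thesis unfolding t sum_list_concat_map map_map
      by (intro arg_cong[where f=sum_list] map_cong refl) (simp add: per_k[OF eqs_wf j] comp_def)
  qed
  also have "\<dots> = (\<Sum>k<length (eqs n Qe). ind (k + 1) j * eqv (eqs n Qe ! k) y)" by (rule sum_list_upt_conv)
  finally show ?thesis .
qed

lemma dev3_01: "i < 2 \<Longrightarrow> j \<le> d3 i \<Longrightarrow> dev_payoff 3 d3 (upay 3 ts3) (strat_of_coords d3 y) i j = 0"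
  using dev_upay[of i 3 j d3 ts3] unfolding ts3_def by simp

end


lemma all3: "(\<forall>i<(3::nat). P i) \<longleftrightarrow> P 0 \<and> P 1 \<and> P 2"
proof -
  have "{..<3::nat} = {0, 1, 2}" by auto
  then show ?thesis by (metis insert_iff lessThan_iff singletonD)
qed

lemma len_eqs: "0 < length (eqs n Qe)" unfolding eqs_def by simp

lemma Mc_pos: "0 < Mc n Qe" using Mc_gt[of n Qe] by simp

lemma sum_lt1:
  assumes c: "rs (2 * Mc n Qe) y \<in> Core n Qe" and off: "off + Mc n Qe \<le> 2 * Mc n Qe"
  shows "(\<Sum>a<Mc n Qe. y (off + a)) < 1" "0 < (\<Sum>a<Mc n Qe. y (off + a))"
proof -
  let ?M = "Mc n Qe"
  have lt: "y (off + a) < eps n Qe" "0 < y (off + a)" if "a < ?M" for a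
  proof -
    have i: "off + a < 2 * ?M" using that off by simp
    show "y (off + a) < eps n Qe" using Core_lt[OF c i] i unfolding rs_def by simp
    show "0 < y (off + a)" using Core_facts(5)[OF c i] i unfolding rs_def by simp
  qed
  have "(\<Sum>a<?M. y (off + a)) < (\<Sum>a<?M. eps n Qe)"
    using Mc_pos[of n Qe] lt by (intro sum_strict_mono) auto
  also have "\<dots> = real ?M / (real ?M + 1)" unfolding eps_def by simp
  also have "\<dots> < 1" by simp
  finally show "(\<Sum>a<?M. y (off + a)) < 1" .
  show "0 < (\<Sum>a<?M. y (off + a))" using Mc_pos[of n Qe] lt by (intro sum_pos) auto
qed

lemma sum_ind_lt: "(\<Sum>k<r. ind (k + 1) j * E k) = (if 1 \<le> j \<and> j \<le> r then E (j - 1) else (0::real))"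
proof -
  have "(\<Sum>k<r. ind (k + 1) j * E k) = (\<Sum>k<r. if k = j - 1 \<and> 1 \<le> j then E k else 0)"
    by (intro sum.cong) (auto simp: ind_def)
  also have "\<dots> = (if 1 \<le> j \<and> j \<le> r then E (j - 1) else 0)"
    by (cases "1 \<le> j") (auto simp: sum.delta')
  finally show ?thesis .
qed

lemma tmne3: "tmne 3 (d3 n Qe) (upay 3 (ts3 n Qe)) = TS (2 * Mc n Qe) (Core n Qe) (length (eqs n Qe))"
proof -
  let ?M = "Mc n Qe" and ?r = "length (eqs n Qe)" and ?d = "d3 n Qe" and ?u = "upay 3 (ts3 n Qe)"
  have dv: "?d 0 = ?M" "?d 1 = ?M" "?d 2 = ?r" unfolding d3_def by auto
  have off: "offset ?d 0 = 0" "offset ?d 1 = ?M" "offset ?d 2 = 2 * ?M" by (rule off3)+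
  have A: "(\<forall>i<3. \<forall>j\<le>?d i. 0 < strat_of_coords ?d y i j \<and> strat_of_coords ?d y i j < 1) \<longleftrightarrow>
     ((\<forall>a<?M. 0 < y a \<and> y a < 1) \<and> 0 < 1 - (\<Sum>a<?M. y a) \<and> 1 - (\<Sum>a<?M. y a) < 1) \<and>
     ((\<forall>a<?M. 0 < y (?M + a) \<and> y (?M + a) < 1) \<and> 0 < 1 - (\<Sum>a<?M. y (?M + a)) \<and> 1 - (\<Sum>a<?M. y (?M + a)) < 1) \<and>
     ((\<forall>a<?r. 0 < y (2 * ?M + a) \<and> y (2 * ?M + a) < 1) \<and> 0 < 1 - (\<Sum>a<?r. y (2 * ?M + a)) \<and> 1 - (\<Sum>a<?r. y (2 * ?M + a)) < 1)" for y
    unfolding all3 box_player dv off by simp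
  have B: "(\<forall>i<3. \<forall>j\<in>{1..?d i}. dev_payoff 3 ?d ?u (strat_of_coords ?d y) i j = dev_payoff 3 ?d ?u (strat_of_coords ?d y) i 0)
     \<longleftrightarrow> (\<forall>k<?r. eqv (eqs n Qe ! k) y = 0)" for y
  proof -
    have z: "\<And>i j. i < 2 \<Longrightarrow> j \<le> ?d i \<Longrightarrow> dev_payoff 3 ?d ?u (strat_of_coords ?d y) i j = 0"
      by (rule dev3_01)
    have t: "\<And>j. j \<le> ?d 2 \<Longrightarrow> dev_payoff 3 ?d ?u (strat_of_coords ?d y) 2 j = (if 1 \<le> j \<and> j \<le> ?r then eqv (eqs n Qe ! (j - 1)) y else 0)"
      using dev3_2 sum_ind_lt by simp
    have "(\<forall>j\<in>{1..?r}. eqv (eqs n Qe ! (j - 1)) y = 0) \<longleftrightarrow> (\<forall>k<?r. eqv (eqs n Qe ! k) y = 0)"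
      by (auto, metis Suc_pred le_simps(3) less_eq_Suc_le diff_Suc_1 atLeastAtMost_iff Suc_leI zero_less_Suc)
    then show ?thesis unfolding all3 using z t dv by simp
  qed
  show ?thesis
  proof (intro set_eqI iffI)
    fix y assume y: "y \<in> tmne 3 ?d ?u"
    then have yR: "y \<in> Rk (2 * ?M + ?r)" unfolding tmne_def sum_d3 by simp
    have a: "(\<forall>a<?M. 0 < y a \<and> y a < 1) \<and> 0 < 1 - (\<Sum>a<?M. y a) \<and> 1 - (\<Sum>a<?M. y a) < 1"
      "(\<forall>a<?M. 0 < y (?M + a) \<and> y (?M + a) < 1) \<and> 0 < 1 - (\<Sum>a<?M. y (?M + a)) \<and> 1 - (\<Sum>a<?M. y (?M + a)) < 1"
      "(\<forall>a<?r. 0 < y (2 * ?M + a) \<and> y (2 * ?M + a) < 1) \<and> 0 < 1 - (\<Sum>a<?r. y (2 * ?M + a)) \<and> 1 - (\<Sum>a<?r. y (2 * ?M + a)) < 1"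
      using y A unfolding tmne_def by auto
    have b: "\<forall>k<?r. eqv (eqs n Qe ! k) y = 0" using y B unfolding tmne_def by simp
    have p: "\<forall>i<2 * ?M. 0 < y i" unfolding mult_2 split_lt using a by simp
    show "y \<in> TS (2 * ?M) (Core n Qe) ?r" unfolding TS_def using yR rs_Core[OF yR] p b a(3) by simp
  next
    fix y assume y: "y \<in> TS (2 * ?M) (Core n Qe) ?r"
    then have yR: "y \<in> Rk (2 * ?M + ?r)" and c: "rs (2 * ?M) y \<in> Core n Qe"
      and d: "\<forall>k<?r. 0 < y (2 * ?M + k)" "(\<Sum>k<?r. y (2 * ?M + k)) < 1"
      unfolding TS_def by auto
    have e: "\<forall>i<2 * ?M. 0 < y i" "\<forall>k<?r. eqv (eqs n Qe ! k) y = 0" using c rs_Core[OF yR] by auto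
    have f: "\<forall>i<2 * ?M. y i < 1"
    proof (intro allI impI)
      fix i assume i: "i < 2 * ?M"
      have "rs (2 * ?M) y i < eps n Qe" by (rule Core_lt[OF c i])
      then show "y i < 1" using i eps_le1[of n Qe] unfolding rs_def by simp
    qed
    have s0: "(\<Sum>a<?M. y (0 + a)) < 1" "0 < (\<Sum>a<?M. y (0 + a))" using sum_lt1[OF c, of 0] by auto
    have s1: "(\<Sum>a<?M. y (?M + a)) < 1" "0 < (\<Sum>a<?M. y (?M + a))" using sum_lt1[OF c, of ?M] by auto
    have s2: "0 < (\<Sum>k<?r. y (2 * ?M + k))" using d(1) len_eqs[of n Qe] by (intro sum_pos) auto
    have s3: "\<forall>k<?r. y (2 * ?M + k) < 1"
    proof (intro allI impI)
      fix k assume k: "k < ?r"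
      have "y (2 * ?M + k) \<le> (\<Sum>k<?r. y (2 * ?M + k))"
        using k d(1) by (intro member_le_sum) (auto simp: less_imp_le)
      then show "y (2 * ?M + k) < 1" using d(2) by simp
    qed
    have p01: "\<forall>a<?M. 0 < y a \<and> y a < 1" "\<forall>a<?M. 0 < y (?M + a) \<and> y (?M + a) < 1"
      using e(1) f by auto
    have "(\<forall>i<3. \<forall>j\<le>?d i. 0 < strat_of_coords ?d y i j \<and> strat_of_coords ?d y i j < 1)"
      unfolding A using p01 s0 s1 s2 s3 d by simp
    then show "y \<in> tmne 3 ?d ?u" unfolding tmne_def sum_d3 using yR B e(2) by simp
  qed
qed


theorem theorem1:
  fixes n :: nat and V :: "(nat \<Rightarrow> real) set"
  assumes "real_variety n V"
  shows "(\<exists>(d :: nat \<Rightarrow> nat) (u :: nat \<Rightarrow> (nat \<Rightarrow> nat) \<Rightarrow> real).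
            stably_iso ((\<Sum>i<3. d i), tmne 3 d u) (n, V))
       \<and> (\<exists>(N :: nat) (u :: nat \<Rightarrow> (nat \<Rightarrow> nat) \<Rightarrow> real). N \<ge> 1 \<and>
            stably_iso ((\<Sum>i<N. (1::nat)), tmne N (\<lambda>_. 1) u) (n, V))"
proof -
  obtain P where fin: "finite P" and pf: "\<forall>p\<in>P. poly_fn p" and V: "V = {x \<in> Rk n. \<forall>p\<in>P. p x = 0}"
    using assms unfolding real_variety_def by blast
  define Q where "Q x = (\<Sum>p\<in>P. (p x)\<^sup>2)" for x
  have pQ: "poly_fn Q" unfolding Q_def using fin pf by (intro poly_fn_sum poly_fn_pow) auto
  have VQ: "V = {x \<in> Rk n. Q x = 0}"
  proof -
    have "Q x = 0 \<longleftrightarrow> (\<forall>p\<in>P. p x = 0)" for x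
      unfolding Q_def using fin by (subst sum_nonneg_eq_0_iff) auto
    then show ?thesis unfolding V by simp
  qed
  obtain Qe where Qe: "Q = ev Qe" using poly_fn_pexp[OF pQ] by blast
  have VV: "V = Vq n Qe" unfolding VQ Vq_def Qe by simp
  let ?M = "Mc n Qe" and ?r = "length (eqs n Qe)"
  have sC: "semialg (2 * ?M) (Core n Qe)" by (rule semialg_Core)
  have C: "stably_iso (2 * ?M, Core n Qe) (n, V)" unfolding VV by (rule core_iso)
  have pr: "stably_iso (2 * ?M + ?r, cyl (2 * ?M) (Core n Qe) ?r) (2 * ?M, Core n Qe)"
    by (rule stably_iso.proj[OF sC])
  have chain: "stably_iso (2 * ?M + ?r, cyl (2 * ?M) (Core n Qe) ?r) (n, V)"
    by (rule stably_iso.trans[OF pr C])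
  have part1: "stably_iso ((\<Sum>i<3. d3 n Qe i), tmne 3 (d3 n Qe) (upay 3 (ts3 n Qe))) (n, V)"
    unfolding sum_d3 tmne3
    by (rule stably_iso.trans[OF stably_iso.sym[OF dummy_simplex_iso[OF sC]] chain])
  have part2: "stably_iso ((\<Sum>i<N2 n Qe. (1::nat)), tmne (N2 n Qe) (\<lambda>_. 1) (upay (N2 n Qe) (ts2 n Qe))) (n, V)"
  proof -
    have "(\<Sum>i<N2 n Qe. (1::nat)) = 2 * ?M + ?r" unfolding N2_def by simp
    then show ?thesis unfolding tmne2
      by (simp only:) (rule stably_iso.trans[OF stably_iso.sym[OF dummy_box_iso[OF sC]] chain])
  qed
  have N1: "1 \<le> N2 n Qe" unfolding N2_def using Mc_pos[of n Qe] by simp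
  show ?thesis using part1 part2 N1 by blast
qed


end
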